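(* Let $E$ be a Dedekind complete Riesz space with weak order unit $e$, let $T$ be a conditional expectation operator on $E$ with $Te=e$, and assume $E$ is $T$-universally complete ($E=L^1(T)$). Let $U$ and $V$ be conditional expectation operators on $E$ compatible with $T$. Then for every $g\in L^\infty(T)$, $$\|UVg-Tg\|_{T,1}\le 4\,\alpha_T(U,V)\,\|g\|_{T,\infty}.$$
   Context: A conditional expectation operator on a Dedekind complete Riesz space $E$ with weak order unit is a positive, order continuous, linear projection $T:E\to E$ whose range $R(T)$ is a Dedekind complete Riesz subspace of $E$ and such that $Te$ is a weak order unit of $E$ for every weak order unit $e$ of $E$. $E^u$ denotes the universal completion of $E$. $E$ is $T$-universally complete if for every upwards directed net $(f_\alpha)$ in $E_+$ with $(Tf_\alpha)$ order bounded in $E^u$, the net $(f_\alpha)$ is order convergent in $E$; then $L^1(T):=E$. Products are taken in the $f$-algebra $E^u$ with multiplicative unit $e$. $L^\infty(T):=\{f\in L^1(T): |f|\le g\text{ for some } g\in R(T)_+\}$, $\|f\|_{T,1}:=T|f|$, $\|f\|_{T,\infty}:=\inf\{g\in R(T)_+:|f|\le g\}$. A conditional expectation operator $U$ on $E$ is compatible with $T$ if $TU=T=UT$; $\mathcal{B}(U)$ is the set of band projections $P$ on $E$ with $Pe\in R(U)$. $\alpha_T(U,V):=\sup\{|TPQe-TPe\cdot TQe| : P\in\mathcal{B}(U),\ Q\in\mathcal{B}(V)\}$ (supremum in the order of $E$). *)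

theory Defs
  imports Complex_Main
begin

text \<open>The universal completion E^u of E is modelled as the whole type 'a (a Riesz space:
  an ordered real vector space that is a lattice); E itself is a subset of 'a.\<close>

definition rabs :: "'a::{ordered_real_vector,lattice} \<Rightarrow> 'a" where
  "rabs x = sup x (- x)"

definition is_sup_in :: "'a::{ordered_real_vector,lattice} set \<Rightarrow> 'a set \<Rightarrow> 'a \<Rightarrow> bool" where
  "is_sup_in E A s \<longleftrightarrow> s \<in> E \<and> (\<forall>a\<in>A. a \<le> s) \<and> (\<forall>b\<in>E. (\<forall>a\<in>A. a \<le> b) \<longrightarrow> s \<le> b)"

definition is_inf_in :: "'a::{ordered_real_vector,lattice} set \<Rightarrow> 'a set \<Rightarrow> 'a \<Rightarrow> bool" where
  "is_inf_in E A s \<longleftrightarrow> s \<in> E \<and> (\<forall>a\<in>A. s \<le> a) \<and> (\<forall>b\<in>E. (\<forall>a\<in>A. b \<le> a) \<longrightarrow> b \<le> s)"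

definition sup_in :: "'a::{ordered_real_vector,lattice} set \<Rightarrow> 'a set \<Rightarrow> 'a" where
  "sup_in E A = (THE s. is_sup_in E A s)"

definition inf_in :: "'a::{ordered_real_vector,lattice} set \<Rightarrow> 'a set \<Rightarrow> 'a" where
  "inf_in E A = (THE s. is_inf_in E A s)"

definition riesz_subspace :: "'a::{ordered_real_vector,lattice} set \<Rightarrow> bool" where
  "riesz_subspace E \<longleftrightarrow> 0 \<in> E \<and> (\<forall>x\<in>E. \<forall>y\<in>E. x + y \<in> E) \<and> (\<forall>c x. x \<in> E \<longrightarrow> c *\<^sub>R x \<in> E)
     \<and> (\<forall>x\<in>E. \<forall>y\<in>E. sup x y \<in> E \<and> inf x y \<in> E)"

definition dedekind_complete_on :: "'a::{ordered_real_vector,lattice} set \<Rightarrow> bool" where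
  "dedekind_complete_on E \<longleftrightarrow>
     (\<forall>A. A \<subseteq> E \<and> A \<noteq> {} \<and> (\<exists>b\<in>E. \<forall>a\<in>A. a \<le> b) \<longrightarrow> (\<exists>s. is_sup_in E A s))"

definition laterally_complete :: "'a::{ordered_real_vector,lattice} itself \<Rightarrow> bool" where
  "laterally_complete _ \<longleftrightarrow>
     (\<forall>A::'a set. (\<forall>a\<in>A. 0 \<le> a) \<and> (\<forall>a\<in>A. \<forall>b\<in>A. a \<noteq> b \<longrightarrow> inf a b = 0)
        \<longrightarrow> (\<exists>s. is_sup_in UNIV A s))"

definition universally_complete :: "'a::{ordered_real_vector,lattice} itself \<Rightarrow> bool" where
  "universally_complete t \<longleftrightarrow> dedekind_complete_on (UNIV::'a set) \<and> laterally_complete t"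

definition order_dense :: "'a::{ordered_real_vector,lattice} set \<Rightarrow> bool" where
  "order_dense E \<longleftrightarrow> (\<forall>u. 0 < u \<longrightarrow> (\<exists>x\<in>E. 0 < x \<and> x \<le> u))"

definition is_universal_completion_of :: "'a::{ordered_real_vector,lattice} set \<Rightarrow> bool" where
  "is_universal_completion_of E \<longleftrightarrow>
     universally_complete TYPE('a) \<and> riesz_subspace E \<and> order_dense E"

definition f_algebra_unit :: "('a::{ordered_real_vector,lattice} \<Rightarrow> 'a \<Rightarrow> 'a) \<Rightarrow> 'a \<Rightarrow> bool" where
  "f_algebra_unit mul e \<longleftrightarrow>
     (\<forall>x y z. mul (x + y) z = mul x z + mul y z) \<and>
     (\<forall>x y z. mul x (y + z) = mul x y + mul x z) \<and>
     (\<forall>c x y. mul (c *\<^sub>R x) y = c *\<^sub>R mul x y) \<and>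
     (\<forall>c x y. mul x (c *\<^sub>R y) = c *\<^sub>R mul x y) \<and>
     (\<forall>x y z. mul (mul x y) z = mul x (mul y z)) \<and>
     (\<forall>x y. 0 \<le> x \<and> 0 \<le> y \<longrightarrow> 0 \<le> mul x y) \<and>
     (\<forall>x y z. inf x y = 0 \<and> 0 \<le> z \<longrightarrow> inf (mul z x) y = 0 \<and> inf (mul x z) y = 0) \<and>
     (\<forall>x. mul e x = x \<and> mul x e = x)"

definition weak_order_unit :: "'a::{ordered_real_vector,lattice} set \<Rightarrow> 'a \<Rightarrow> bool" where
  "weak_order_unit E w \<longleftrightarrow> w \<in> E \<and> 0 \<le> w \<and> (\<forall>x\<in>E. inf (rabs x) w = 0 \<longrightarrow> x = 0)"

definition updirected :: "'a::order set \<Rightarrow> bool" where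
  "updirected A \<longleftrightarrow> (\<forall>a\<in>A. \<forall>b\<in>A. \<exists>c\<in>A. a \<le> c \<and> b \<le> c)"

definition downdirected :: "'a::order set \<Rightarrow> bool" where
  "downdirected A \<longleftrightarrow> (\<forall>a\<in>A. \<forall>b\<in>A. \<exists>c\<in>A. c \<le> a \<and> c \<le> b)"

definition linear_on :: "'a::{ordered_real_vector,lattice} set \<Rightarrow> ('a \<Rightarrow> 'a) \<Rightarrow> bool" where
  "linear_on E T \<longleftrightarrow> (\<forall>x\<in>E. \<forall>y\<in>E. T (x + y) = T x + T y) \<and> (\<forall>c. \<forall>x\<in>E. T (c *\<^sub>R x) = c *\<^sub>R T x)"

definition positive_on :: "'a::{ordered_real_vector,lattice} set \<Rightarrow> ('a \<Rightarrow> 'a) \<Rightarrow> bool" where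
  "positive_on E T \<longleftrightarrow> (\<forall>x\<in>E. 0 \<le> x \<longrightarrow> 0 \<le> T x)"

definition order_continuous_on :: "'a::{ordered_real_vector,lattice} set \<Rightarrow> ('a \<Rightarrow> 'a) \<Rightarrow> bool" where
  "order_continuous_on E T \<longleftrightarrow>
     (\<forall>D. D \<subseteq> E \<and> D \<noteq> {} \<and> downdirected D \<and> is_inf_in E D 0 \<longrightarrow> is_inf_in E (T ` D) 0)"

definition cond_exp :: "'a::{ordered_real_vector,lattice} set \<Rightarrow> ('a \<Rightarrow> 'a) \<Rightarrow> bool" where
  "cond_exp E T \<longleftrightarrow> T ` E \<subseteq> E \<and> linear_on E T \<and> positive_on E T \<and> order_continuous_on E T \<and>
     (\<forall>x\<in>E. T (T x) = T x) \<and> riesz_subspace (T ` E) \<and> dedekind_complete_on (T ` E) \<and>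
     (\<forall>w. weak_order_unit E w \<longrightarrow> weak_order_unit E (T w))"

definition T_universally_complete :: "'a::{ordered_real_vector,lattice} set \<Rightarrow> ('a \<Rightarrow> 'a) \<Rightarrow> bool" where
  "T_universally_complete E T \<longleftrightarrow>
     (\<forall>A. A \<subseteq> E \<and> A \<noteq> {} \<and> (\<forall>a\<in>A. 0 \<le> a) \<and> updirected A \<and> (\<exists>b. \<forall>a\<in>A. rabs (T a) \<le> b)
        \<longrightarrow> (\<exists>s. is_sup_in E A s))"

definition Linfty :: "'a::{ordered_real_vector,lattice} set \<Rightarrow> ('a \<Rightarrow> 'a) \<Rightarrow> 'a set" where
  "Linfty E T = {f \<in> E. \<exists>g \<in> T ` E. 0 \<le> g \<and> rabs f \<le> g}"

definition norm_T1 :: "('a::{ordered_real_vector,lattice} \<Rightarrow> 'a) \<Rightarrow> 'a \<Rightarrow> 'a" where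
  "norm_T1 T f = T (rabs f)"

definition norm_Tinf :: "'a::{ordered_real_vector,lattice} set \<Rightarrow> ('a \<Rightarrow> 'a) \<Rightarrow> 'a \<Rightarrow> 'a" where
  "norm_Tinf E T f = inf_in E {g \<in> T ` E. 0 \<le> g \<and> rabs f \<le> g}"

definition band :: "'a::{ordered_real_vector,lattice} set \<Rightarrow> 'a set \<Rightarrow> bool" where
  "band E B \<longleftrightarrow> B \<subseteq> E \<and> riesz_subspace B \<and>
     (\<forall>x\<in>E. \<forall>y\<in>B. rabs x \<le> rabs y \<longrightarrow> x \<in> B) \<and>
     (\<forall>A s. A \<subseteq> B \<and> is_sup_in E A s \<longrightarrow> s \<in> B)"

definition disj_compl :: "'a::{ordered_real_vector,lattice} set \<Rightarrow> 'a set \<Rightarrow> 'a set" where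
  "disj_compl E B = {x \<in> E. \<forall>y\<in>B. inf (rabs x) (rabs y) = 0}"

definition band_projection :: "'a::{ordered_real_vector,lattice} set \<Rightarrow> ('a \<Rightarrow> 'a) \<Rightarrow> bool" where
  "band_projection E P \<longleftrightarrow> (\<exists>B. band E B \<and> (\<forall>x\<in>E. P x \<in> B \<and> x - P x \<in> disj_compl E B))"

definition bandsB :: "'a::{ordered_real_vector,lattice} set \<Rightarrow> 'a \<Rightarrow> ('a \<Rightarrow> 'a) \<Rightarrow> ('a \<Rightarrow> 'a) set" where
  "bandsB E e U = {P. band_projection E P \<and> P e \<in> U ` E}"

definition compatible :: "'a::{ordered_real_vector,lattice} set \<Rightarrow> ('a \<Rightarrow> 'a) \<Rightarrow> ('a \<Rightarrow> 'a) \<Rightarrow> bool" where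
  "compatible E T U \<longleftrightarrow> (\<forall>x\<in>E. T (U x) = T x \<and> U (T x) = T x)"

definition alphaT :: "'a::{ordered_real_vector,lattice} set \<Rightarrow> ('a \<Rightarrow> 'a \<Rightarrow> 'a) \<Rightarrow> 'a \<Rightarrow>
    ('a \<Rightarrow> 'a) \<Rightarrow> ('a \<Rightarrow> 'a) \<Rightarrow> ('a \<Rightarrow> 'a) \<Rightarrow> 'a" where
  "alphaT E mul e T U V = sup_in E
     {rabs (T (P (Q e)) - mul (T (P e)) (T (Q e))) | P Q. P \<in> bandsB E e U \<and> Q \<in> bandsB E e V}"

end

theory Submission
  imports Defs "HOL-Library.Lattice_Algebras"
begin


definition rpos :: "'a::{ordered_real_vector,lattice} \<Rightarrow> 'a" where "rpos x = sup x 0"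
definition rneg :: "'a::{ordered_real_vector,lattice} \<Rightarrow> 'a" where "rneg x = sup (- x) 0"

context begin
interpretation L: lattice_ab_group_add "(+)" "0::'a::{ordered_real_vector,lattice}" "(-)" uminus "(\<le>)" "(<)" inf sup
    by unfold_locales

lemma add_sup_r: fixes a b c :: "'a::{ordered_real_vector,lattice}" shows "sup a b + c = sup (a+c) (b+c)"
  by (rule L.add_sup_distrib_right)
lemma add_inf_r: fixes a b c :: "'a::{ordered_real_vector,lattice}" shows "inf a b + c = inf (a+c) (b+c)"
  by (rule L.add_inf_distrib_right)
lemma add_sup_l: fixes a b c :: "'a::{ordered_real_vector,lattice}" shows "c + sup a b = sup (c+a) (c+b)"
  by (rule L.add_sup_distrib_left)
lemma add_inf_l: fixes a b c :: "'a::{ordered_real_vector,lattice}" shows "c + inf a b = inf (c+a) (c+b)"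
  by (rule L.add_inf_distrib_left)
lemma add_eq_inf_sup: fixes a b :: "'a::{ordered_real_vector,lattice}" shows "a + b = sup a b + inf a b"
  by (rule L.add_eq_inf_sup)
lemma neg_sup: fixes a b :: "'a::{ordered_real_vector,lattice}" shows "- sup a b = inf (-a) (-b)"
  by (rule L.neg_sup_eq_inf)
lemma neg_inf: fixes a b :: "'a::{ordered_real_vector,lattice}" shows "- inf a b = sup (-a) (-b)"
  by (rule L.neg_inf_eq_sup)
end

lemma sup_minus: fixes a b c :: "'a::{ordered_real_vector,lattice}" shows "sup a b - c = sup (a - c) (b - c)"
  by (simp only: diff_conv_add_uminus add_sup_r)
lemma minus_inf: fixes a b c :: "'a::{ordered_real_vector,lattice}" shows "c - inf a b = sup (c - a) (c - b)"
  by (simp only: diff_conv_add_uminus neg_inf add_sup_l)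

lemma rpos_ge0[simp]: "0 \<le> rpos x" by (simp add: rpos_def)
lemma rneg_ge0[simp]: "0 \<le> rneg x" by (simp add: rneg_def)
lemma le_rpos: "x \<le> rpos x" by (simp add: rpos_def)
lemma rpos_id: "0 \<le> x \<Longrightarrow> rpos x = x" by (simp add: rpos_def sup_absorb1)
lemma rneg_zero: "0 \<le> x \<Longrightarrow> rneg x = 0" by (simp add: rneg_def sup_absorb2)

lemma rprts: fixes x :: "'a::{ordered_real_vector,lattice}" shows "x = rpos x - rneg x"
proof -
  have 1: "- sup (-x) 0 = inf x 0" using neg_sup[of "-x" 0] by (simp only: minus_minus minus_zero)
  have "rpos x - rneg x = sup x 0 + - sup (-x) 0" unfolding rpos_def rneg_def by (rule diff_conv_add_uminus)
  also have "\<dots> = sup x 0 + inf x 0" by (simp only: 1)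
  finally have "rpos x - rneg x = sup x 0 + inf x 0" .
  also have "\<dots> = x + 0" by (rule add_eq_inf_sup[symmetric])
  finally show ?thesis by simp
qed

lemma rabs_prts: fixes x :: "'a::{ordered_real_vector,lattice}" shows "rabs x = rpos x + rneg x"
proof -
  have "rpos x + rneg x = sup (x + rneg x) (rneg x)" by (simp add: rpos_def add_sup_r)
  also have "x + rneg x = rpos x"
  proof -
    have "x + rneg x = (rpos x - rneg x) + rneg x" by (subst rprts[of x]) (rule refl)
    then show ?thesis by simp
  qed
  also have "sup (rpos x) (rneg x) = sup (sup x (-x)) 0" by (simp add: rpos_def rneg_def sup_aci)
  also have "\<dots> = sup x (-x)"
  proof -
    have "0 \<le> sup x (-x)"
    proof -
      have "x \<le> sup x (-x)" "-x \<le> sup x (-x)" by auto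
      then have "x + -x \<le> sup x (-x) + sup x (-x)" by (rule add_mono)
      then have h: "0 \<le> sup x (-x) + sup x (-x)" by simp
      have "(1/2::real) *\<^sub>R (0::'a) \<le> (1/2::real) *\<^sub>R (sup x (-x) + sup x (-x))"
        by (rule scaleR_left_mono[OF h]) simp
      also have "(1/2::real) *\<^sub>R (sup x (-x) + sup x (-x)) = sup x (-x)"
        by (simp add: scaleR_2[symmetric])
      finally show ?thesis by simp
    qed
    then show ?thesis by (simp add: sup_absorb1)
  qed
  finally show ?thesis by (simp add: rabs_def)
qed

lemma rabs_ge0[simp]: "0 \<le> rabs x" by (simp add: rabs_prts add_nonneg_nonneg)
lemma le_rabs: "x \<le> rabs x" "- x \<le> rabs x" by (auto simp: rabs_def)
lemma rabs_le_iff: "rabs x \<le> y \<longleftrightarrow> x \<le> y \<and> - x \<le> y" by (simp add: rabs_def)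
lemma rabs_minus[simp]: "rabs (- x) = rabs x" by (simp add: rabs_def sup_commute)
lemma rabs_id: "0 \<le> x \<Longrightarrow> rabs x = x" by (simp add: rabs_prts rpos_id rneg_zero)
lemma rabs_0[simp]: "rabs 0 = 0" by (simp add: rabs_id)
lemma rabs_eq0: "rabs x = 0 \<longleftrightarrow> x = 0"
proof
  assume "rabs x = 0"
  then have a: "x \<le> 0" "-x \<le> 0" using le_rabs[of x] by auto
  then have "0 \<le> x" by simp
  then show "x = 0" using a(1) by (rule order.antisym[rotated])
qed simp
lemma rabs_le0: "rabs x \<le> 0 \<Longrightarrow> x = 0"
  using rabs_eq0 rabs_ge0 order.antisym by metis
lemma rabs_triangle: "rabs (x + y) \<le> rabs x + rabs y"
  unfolding rabs_le_iff using add_mono[OF le_rabs(1)[of x] le_rabs(1)[of y]] add_mono[OF le_rabs(2)[of x] le_rabs(2)[of y]]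
  by simp
lemma rabs_diff_le: "rabs (x - y) \<le> rabs x + rabs y"
  using rabs_triangle[of x "-y"] by simp

lemma scale_inf: fixes a b :: "'a::{ordered_real_vector,lattice}" assumes "0 \<le> c"
  shows "c *\<^sub>R inf a b = inf (c *\<^sub>R a) (c *\<^sub>R b)"
proof (cases "c = 0")
  case False
  then have c: "0 < c" using assms by simp
  show ?thesis
  proof (rule order.antisym)
    show "c *\<^sub>R inf a b \<le> inf (c *\<^sub>R a) (c *\<^sub>R b)" using assms by (simp add: scaleR_left_mono)
    have "(1/c) *\<^sub>R inf (c *\<^sub>R a) (c *\<^sub>R b) \<le> (1/c) *\<^sub>R (c *\<^sub>R a)"
      by (rule scaleR_left_mono) (use c in auto)
    moreover have "(1/c) *\<^sub>R inf (c *\<^sub>R a) (c *\<^sub>R b) \<le> (1/c) *\<^sub>R (c *\<^sub>R b)"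
      by (rule scaleR_left_mono) (use c in auto)
    ultimately have "(1/c) *\<^sub>R inf (c *\<^sub>R a) (c *\<^sub>R b) \<le> inf a b" using c by simp
    then have "c *\<^sub>R ((1/c) *\<^sub>R inf (c *\<^sub>R a) (c *\<^sub>R b)) \<le> c *\<^sub>R inf a b"
      by (rule scaleR_left_mono) (use c in simp)
    then show "inf (c *\<^sub>R a) (c *\<^sub>R b) \<le> c *\<^sub>R inf a b" using c by simp
  qed
qed simp

lemma scale_sup: fixes a b :: "'a::{ordered_real_vector,lattice}" assumes "0 \<le> c"
  shows "c *\<^sub>R sup a b = sup (c *\<^sub>R a) (c *\<^sub>R b)"
proof -
  have "sup a b = - inf (-a) (-b)" using neg_inf[of "-a" "-b"] by simp
  then have "c *\<^sub>R sup a b = c *\<^sub>R (- inf (-a) (-b))" by simp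
  also have "\<dots> = - (c *\<^sub>R inf (-a) (-b))" by (rule scaleR_minus_right)
  also have "\<dots> = - inf (c *\<^sub>R (-a)) (c *\<^sub>R (-b))" by (simp only: scale_inf[OF assms, of "-a" "-b"])
  also have "\<dots> = sup (- (c *\<^sub>R (-a))) (- (c *\<^sub>R (-b)))" by (rule neg_inf)
  also have "\<dots> = sup (c *\<^sub>R a) (c *\<^sub>R b)" by simp
  finally show ?thesis .
qed

lemma rpos_scale: "0 \<le> c \<Longrightarrow> rpos (c *\<^sub>R x) = c *\<^sub>R rpos x"
  by (simp add: rpos_def scale_sup)
lemma rneg_scale: "0 \<le> c \<Longrightarrow> rneg (c *\<^sub>R x) = c *\<^sub>R rneg x"
  by (simp add: rneg_def scale_sup)
lemma rabs_scale_pos: "0 \<le> c \<Longrightarrow> rabs (c *\<^sub>R x) = c *\<^sub>R rabs x"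
  by (simp add: rabs_def scale_sup)
lemma rabs_scale: "rabs (c *\<^sub>R x) = \<bar>c\<bar> *\<^sub>R rabs x"
proof (cases "0 \<le> c")
  case True then show ?thesis by (simp add: rabs_scale_pos)
next
  case False
  then have "rabs (c *\<^sub>R x) = rabs ((-c) *\<^sub>R x)" by (metis rabs_minus scaleR_minus_left)
  also have "\<dots> = (-c) *\<^sub>R rabs x" using rabs_scale_pos[of "-c" x] False by simp
  finally show ?thesis using False by simp
qed

lemma rpos_mono: "x \<le> y \<Longrightarrow> rpos x \<le> rpos y" by (auto simp: rpos_def intro: le_supI1)
lemma rneg_anti: "x \<le> y \<Longrightarrow> rneg y \<le> rneg x" by (auto simp: rneg_def intro: le_supI1)
lemma rpos_le_rabs: "rpos x \<le> rabs x" by (simp add: rabs_prts)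
lemma rneg_le_rabs: "rneg x \<le> rabs x" by (simp add: rabs_prts)

lemma rpos_rneg_disj: "inf (rpos x) (rneg x) = 0"
proof -
  have "rpos x + rneg x = sup (rpos x) (rneg x) + inf (rpos x) (rneg x)" by (rule add_eq_inf_sup)
  moreover have "sup (rpos x) (rneg x) = rabs x"
  proof -
    have "sup (rpos x) (rneg x) = sup (sup x (-x)) 0" by (simp add: rpos_def rneg_def sup_aci)
    also have "\<dots> = sup x (-x)" using rabs_ge0[of x] by (simp add: rabs_def sup_absorb1)
    finally show ?thesis by (simp add: rabs_def)
  qed
  ultimately show ?thesis by (simp add: rabs_prts)
qed

lemma disj_sum: fixes u v w :: "'a::{ordered_real_vector,lattice}"
  assumes "0 \<le> u" "0 \<le> v" "0 \<le> w" "inf u v = 0" "inf u w = 0"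
  shows "inf u (v + w) = 0"
proof -
  have "inf u (v + w) \<le> inf (u + w) (v + w)" using assms by (auto intro: le_infI1 simp: add_increasing2)
  also have "\<dots> = inf u v + w" by (simp add: add_inf_r)
  finally have "inf u (v + w) \<le> w" using assms by simp
  then have "inf u (v + w) \<le> inf u w" by simp
  then have "inf u (v + w) \<le> 0" using assms by simp
  moreover have "0 \<le> inf u (v + w)" using assms by (simp add: add_nonneg_nonneg)
  ultimately show ?thesis by simp
qed

lemma disj_parts: fixes u v :: "'a::{ordered_real_vector,lattice}"
  assumes "0 \<le> u" "0 \<le> v" "inf u v = 0"
  shows "rpos (u - v) = u" "rneg (u - v) = v" "rabs (u - v) = u + v"
proof -
  have "rpos (u - v) = sup u v - v" by (simp add: rpos_def sup_minus)
  also have "sup u v = u + v" using add_eq_inf_sup[of u v] assms(3) by (simp only: add_0_right)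
  finally show 1: "rpos (u - v) = u" by simp
  have "rneg (u - v) = sup v u - u" by (simp add: rneg_def sup_minus)
  also have "sup v u = u + v" using add_eq_inf_sup[of u v] assms(3) by (simp only: add_0_right sup_commute)
  finally show 2: "rneg (u - v) = v" by simp
  show "rabs (u - v) = u + v" using 1 2 by (simp add: rabs_prts)
qed

lemma disj_mono: fixes a b c d :: "'a::{ordered_real_vector,lattice}"
  assumes "inf a b = 0" "0 \<le> c" "c \<le> a" "0 \<le> d" "d \<le> b" shows "inf c d = 0"
proof -
  have "inf c d \<le> inf a b" using assms(3,5) by (rule inf_mono)
  then have "inf c d \<le> 0" using assms(1) by simp
  moreover have "0 \<le> inf c d" using assms by simp
  ultimately show ?thesis by simp
qed

lemma disj_abs_add: fixes a b :: "'a::{ordered_real_vector,lattice}"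
  assumes "inf (rabs a) (rabs b) = 0"
  shows "rabs (a + b) = rabs a + rabs b"
proof -
  have d: "inf (rpos a + rpos b) (rneg a + rneg b) = 0"
  proof -
    have assms': "inf (rabs b) (rabs a) = 0" using assms by (simp only: inf_commute)
    have ab1: "inf (rpos a) (rneg b) = 0" by (rule disj_mono[OF assms]) (simp_all add: rpos_le_rabs rneg_le_rabs)
    have ab2: "inf (rpos b) (rneg a) = 0" by (rule disj_mono[OF assms']) (simp_all add: rpos_le_rabs rneg_le_rabs)
    have "inf (rpos a) (rneg a + rneg b) = 0" by (rule disj_sum) (simp_all only: rpos_rneg_disj ab1 rpos_ge0 rneg_ge0)
    then have 1: "inf (rneg a + rneg b) (rpos a) = 0" by (simp only: inf_commute)
    have "inf (rpos b) (rneg a + rneg b) = 0" by (rule disj_sum) (simp_all only: rpos_rneg_disj ab2 rpos_ge0 rneg_ge0)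
    then have 2: "inf (rneg a + rneg b) (rpos b) = 0" by (simp only: inf_commute)
    have "inf (rneg a + rneg b) (rpos a + rpos b) = 0"
      by (rule disj_sum) (simp_all only: 1 2 rpos_ge0 rneg_ge0 add_nonneg_nonneg)
    then show ?thesis by (simp only: inf_commute)
  qed
  have "(rpos a + rpos b) - (rneg a + rneg b) = (rpos a - rneg a) + (rpos b - rneg b)" by (simp add: algebra_simps)
  then have eq: "a + b = (rpos a + rpos b) - (rneg a + rneg b)" by (simp flip: rprts)
  have "rabs ((rpos a + rpos b) - (rneg a + rneg b)) = (rpos a + rpos b) + (rneg a + rneg b)"
    by (rule disj_parts(3)[OF _ _ d]) (simp_all add: add_nonneg_nonneg)
  then have "rabs (a + b) = (rpos a + rpos b) + (rneg a + rneg b)" by (simp only: eq)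
  moreover have "rabs a + rabs b = (rpos a + rpos b) + (rneg a + rneg b)"
    by (simp only: rabs_prts[of a] rabs_prts[of b] add_ac)
  ultimately show ?thesis by (simp only:)
qed

lemma disj_abs_diff: fixes a b :: "'a::{ordered_real_vector,lattice}"
  assumes "inf (rabs a) (rabs b) = 0"
  shows "rabs (a - b) = rabs a + rabs b"
  using disj_abs_add[of a "-b"] assms by simp

lemma sub_inf_rpos: "f - inf f c = rpos (f - c)"
proof -
  have "f - inf f c = sup (f - f) (f - c)" by (rule minus_inf)
  also have "\<dots> = sup 0 (f - c)" by simp
  finally show ?thesis by (simp add: rpos_def sup_commute)
qed

lemma disj_below: fixes a z s :: "'a::{ordered_real_vector,lattice}"
  assumes "0 \<le> a" "0 \<le> z" "inf a z = 0" "a \<le> s"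
  shows "a \<le> s - inf s z"
proof -
  have "a = a - inf a z" using assms by simp
  also have "\<dots> = rpos (a - z)" by (rule sub_inf_rpos)
  also have "\<dots> \<le> rpos (s - z)" using assms by (intro rpos_mono) (simp add: diff_right_mono)
  also have "\<dots> = s - inf s z" by (simp add: sub_inf_rpos)
  finally show ?thesis .
qed




lemma is_sup_unique: "is_sup_in S A s \<Longrightarrow> is_sup_in S A t \<Longrightarrow> s = t"
  unfolding is_sup_in_def by (meson order.antisym)
lemma is_inf_unique: "is_inf_in S A s \<Longrightarrow> is_inf_in S A t \<Longrightarrow> s = t"
  unfolding is_inf_in_def by (meson order.antisym)

lemma rabs_between: fixes a b c :: "'a::{ordered_real_vector,lattice}"
  assumes "0 \<le> a" "a \<le> c" "0 \<le> b" "b \<le> c" shows "rabs (a - b) \<le> c"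
proof -
  have "a - b \<le> a" using assms(3) by simp
  then have "a - b \<le> c" using assms(2) by (rule order_trans)
  moreover have "b - a \<le> b" using assms(1) by simp
  then have "b - a \<le> c" using assms(4) by (rule order_trans)
  ultimately show ?thesis by (simp add: rabs_le_iff)
qed

lemma disj_scale: fixes r z :: "'a::{ordered_real_vector,lattice}"
  assumes "0 \<le> r" "0 \<le> z" "inf r z = 0" "0 \<le> c" shows "inf (c *\<^sub>R r) z = 0"
proof -
  define m where "m = max 1 c"
  have m: "1 \<le> m" "c \<le> m" by (auto simp: m_def)
  have "c *\<^sub>R r \<le> m *\<^sub>R r" using m assms by (intro scaleR_right_mono) auto
  moreover have "z \<le> m *\<^sub>R z"
  proof -
    have "1 *\<^sub>R z \<le> m *\<^sub>R z" using m assms by (intro scaleR_right_mono) auto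
    then show ?thesis by simp
  qed
  ultimately have "inf (c *\<^sub>R r) z \<le> inf (m *\<^sub>R r) (m *\<^sub>R z)" by (rule inf_mono)
  also have "\<dots> = m *\<^sub>R inf r z" using m by (simp add: scale_inf)
  finally have "inf (c *\<^sub>R r) z \<le> 0" using assms by simp
  moreover have "0 \<le> inf (c *\<^sub>R r) z" using assms by (simp add: scaleR_nonneg_nonneg)
  ultimately show ?thesis by simp
qed

lemma sup_disj: fixes s z :: "'a::{ordered_real_vector,lattice}"
  assumes "is_sup_in UNIV A s" "0 \<le> s" "0 \<le> z" "\<And>a. a \<in> A \<Longrightarrow> 0 \<le> a \<and> inf a z = 0"
  shows "inf s z = 0"
proof -
  have "\<forall>a\<in>A. a \<le> s - inf s z"
  proof
    fix a assume a: "a \<in> A"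
    have "a \<le> s" using assms(1) a by (simp add: is_sup_in_def)
    then show "a \<le> s - inf s z" using assms(3) assms(4)[OF a] by (intro disj_below) auto
  qed
  then have "s \<le> s - inf s z" using assms(1) by (simp add: is_sup_in_def)
  then have "inf s z \<le> 0" by (simp add: le_diff_eq)
  moreover have "0 \<le> inf s z" using assms by simp
  ultimately show ?thesis by simp
qed

definition iscomp :: "'a::{ordered_real_vector,lattice} \<Rightarrow> 'a \<Rightarrow> bool" where
  "iscomp e c \<longleftrightarrow> 0 \<le> c \<and> c \<le> e \<and> inf c (e - c) = 0"

locale fsetting =
  fixes E :: "'a::{ordered_real_vector,lattice} set" and mul :: "'a \<Rightarrow> 'a \<Rightarrow> 'a" and e :: 'a
  assumes uc: "is_universal_completion_of E" and dcE: "dedekind_complete_on E"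
    and wu: "weak_order_unit E e" and fa: "f_algebra_unit mul e"
begin

lemma mul_add_l: "mul (x + y) z = mul x z + mul y z" using fa by (simp add: f_algebra_unit_def)
lemma mul_add_r: "mul x (y + z) = mul x y + mul x z" using fa by (simp add: f_algebra_unit_def)
lemma mul_scale_l: "mul (c *\<^sub>R x) y = c *\<^sub>R mul x y" using fa by (simp add: f_algebra_unit_def)
lemma mul_scale_r: "mul x (c *\<^sub>R y) = c *\<^sub>R mul x y" using fa by (simp add: f_algebra_unit_def)
lemma mul_assoc: "mul (mul x y) z = mul x (mul y z)" using fa by (simp add: f_algebra_unit_def)
lemma mul_nonneg: "0 \<le> x \<Longrightarrow> 0 \<le> y \<Longrightarrow> 0 \<le> mul x y" using fa by (simp add: f_algebra_unit_def)
lemma mul_ax: "inf x y = 0 \<Longrightarrow> 0 \<le> z \<Longrightarrow> inf (mul z x) y = 0 \<and> inf (mul x z) y = 0"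
  using fa unfolding f_algebra_unit_def by blast
lemma mul_e_l[simp]: "mul e x = x" using fa by (simp add: f_algebra_unit_def)
lemma mul_e_r[simp]: "mul x e = x" using fa by (simp add: f_algebra_unit_def)

lemma mul_0_l[simp]: "mul 0 x = 0" using mul_scale_l[of 0 0 x] by simp
lemma mul_0_r[simp]: "mul x 0 = 0" using mul_scale_r[of x 0 0] by simp
lemma mul_minus_l: "mul (- x) y = - mul x y" using mul_scale_l[of "-1" x y] by simp
lemma mul_minus_r: "mul x (- y) = - mul x y" using mul_scale_r[of x "-1" y] by simp
lemma mul_diff_l: "mul (x - y) z = mul x z - mul y z"
  using mul_add_l[of x "-y" z] by (simp add: mul_minus_l)
lemma mul_diff_r: "mul x (y - z) = mul x y - mul x z"
  using mul_add_r[of x y "-z"] by (simp add: mul_minus_r)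

lemma mul_mono_r: "0 \<le> z \<Longrightarrow> x \<le> y \<Longrightarrow> mul z x \<le> mul z y"
  using mul_nonneg[of z "y - x"] by (simp add: mul_diff_r)
lemma mul_mono_l: "0 \<le> z \<Longrightarrow> x \<le> y \<Longrightarrow> mul x z \<le> mul y z"
  using mul_nonneg[of "y - x" z] by (simp add: mul_diff_l)

lemma mul_disj_zero: assumes "0 \<le> x" "0 \<le> y" "inf x y = 0" shows "mul x y = 0"
proof -
  have "inf y x = 0" using assms by (simp add: inf_commute)
  then have "inf (mul x y) x = 0" using mul_ax[of y x x] assms by blast
  then have "inf x (mul x y) = 0" by (simp add: inf_commute)
  then have "inf (mul x y) (mul x y) = 0" using mul_ax[of x "mul x y" y] assms by blast
  then show ?thesis by simp
qed

lemma e_unit: assumes "0 \<le> w" "inf w e = 0" shows "w = 0"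
proof -
  have "inf e w = 0" using assms by (simp add: inf_commute)
  then have "inf (mul w e) w = 0" using mul_ax[of e w w] assms by blast
  then show ?thesis by simp
qed

lemma mul_split: "mul x y = mul (rpos x) y - mul (rneg x) y"
  using rprts[of x] mul_diff_l by metis
lemma mul_split_r: "mul x y = mul x (rpos y) - mul x (rneg y)"
  using rprts[of y] mul_diff_r by metis

lemma rabs_mul_l: assumes "0 \<le> z" shows "rabs (mul z x) = mul z (rabs x)"
  and "rpos (mul z x) = mul z (rpos x)"
proof -
  have d1: "inf (mul z (rpos x)) (rneg x) = 0" using mul_ax[OF rpos_rneg_disj assms] by blast
  have "inf (rneg x) (mul z (rpos x)) = 0" using d1 by (simp add: inf_commute)
  then have d: "inf (mul z (rneg x)) (mul z (rpos x)) = 0" using mul_ax[of "rneg x" "mul z (rpos x)" z] assms by blast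
  then have d': "inf (mul z (rpos x)) (mul z (rneg x)) = 0" by (simp add: inf_commute)
  have p: "0 \<le> mul z (rpos x)" "0 \<le> mul z (rneg x)" using assms by (auto intro: mul_nonneg)
  have "mul z x = mul z (rpos x) - mul z (rneg x)" by (rule mul_split_r)
  then show "rabs (mul z x) = mul z (rabs x)" "rpos (mul z x) = mul z (rpos x)"
    using disj_parts[OF p d'] by (simp_all add: rabs_prts mul_add_r)
qed

lemma rabs_mul_r: assumes "0 \<le> z" shows "rabs (mul x z) = mul (rabs x) z"
  and "rpos (mul x z) = mul (rpos x) z"
proof -
  have d1: "inf (mul (rpos x) z) (rneg x) = 0" using mul_ax[OF rpos_rneg_disj assms] by blast
  have "inf (rneg x) (mul (rpos x) z) = 0" using d1 by (simp add: inf_commute)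
  then have d: "inf (mul (rneg x) z) (mul (rpos x) z) = 0" using mul_ax[of "rneg x" "mul (rpos x) z" z] assms by blast
  then have d': "inf (mul (rpos x) z) (mul (rneg x) z) = 0" by (simp add: inf_commute)
  have p: "0 \<le> mul (rpos x) z" "0 \<le> mul (rneg x) z" using assms by (auto intro: mul_nonneg)
  have "mul x z = mul (rpos x) z - mul (rneg x) z" by (rule mul_split)
  then show "rabs (mul x z) = mul (rabs x) z" "rpos (mul x z) = mul (rpos x) z"
    using disj_parts[OF p d'] by (simp_all add: rabs_prts mul_add_l)
qed

lemma rabs_mul: "rabs (mul x y) = mul (rabs x) (rabs y)"
proof -
  have d1: "inf (mul (rpos x) (rabs y)) (rneg x) = 0" using mul_ax[OF rpos_rneg_disj rabs_ge0] by blast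
  have "inf (rneg x) (mul (rpos x) (rabs y)) = 0" using d1 by (simp add: inf_commute)
  then have d: "inf (mul (rneg x) (rabs y)) (mul (rpos x) (rabs y)) = 0"
    using mul_ax[of "rneg x" "mul (rpos x) (rabs y)" "rabs y"] by simp
  have "rabs (mul x y) = rabs (mul (rpos x) y - mul (rneg x) y)" by (simp flip: mul_split)
  also have "\<dots> = rabs (mul (rpos x) y) + rabs (mul (rneg x) y)"
    using d by (intro disj_abs_diff) (simp add: rabs_mul_l inf_commute)
  also have "\<dots> = mul (rpos x) (rabs y) + mul (rneg x) (rabs y)"
    by (simp only: rabs_mul_l(1)[OF rpos_ge0] rabs_mul_l(1)[OF rneg_ge0])
  also have "\<dots> = mul (rabs x) (rabs y)" by (simp only: rabs_prts[of x] mul_add_l)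
  finally show ?thesis .
qed

lemma mul_le_rabs: "mul x y \<le> mul (rabs x) (rabs y)"
  using le_rabs(1)[of "mul x y"] by (simp add: rabs_mul)

lemma mul_sup_r: assumes "0 \<le> z" shows "mul z (sup x y) = sup (mul z x) (mul z y)"
proof -
  have 1: "sup x y = y + rpos (x - y)"
    by (simp add: rpos_def add_sup_l)
  have 2: "sup (mul z x) (mul z y) = mul z y + rpos (mul z x - mul z y)"
    by (simp add: rpos_def add_sup_l)
  show ?thesis using rabs_mul_l(2)[OF assms, of "x - y"] by (simp add: 1 2 mul_add_r mul_diff_r)
qed

lemma mul_inf_r: assumes "0 \<le> z" shows "mul z (inf x y) = inf (mul z x) (mul z y)"
proof -
  have "inf x y = - sup (-x) (-y)" using neg_sup[of "-x" "-y"] by simp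
  then have "mul z (inf x y) = - mul z (sup (-x) (-y))" by (simp add: mul_minus_r)
  also have "\<dots> = - sup (- mul z x) (- mul z y)" by (simp add: mul_sup_r[OF assms] mul_minus_r)
  also have "\<dots> = inf (mul z x) (mul z y)" by (simp add: neg_sup)
  finally show ?thesis .
qed

end



context fsetting begin

lemma dcU: "dedekind_complete_on (UNIV::'a set)"
  using uc by (simp add: is_universal_completion_of_def universally_complete_def)
lemma e_in: "e \<in> E" using wu by (simp add: weak_order_unit_def)
lemma e_ge0: "0 \<le> e" using wu by (simp add: weak_order_unit_def)

lemma dc_UNIV_ex: fixes A :: "'a set" assumes "A \<noteq> {}" "\<forall>a\<in>A. a \<le> b" shows "\<exists>s. is_sup_in UNIV A s"
proof -
  have "A \<subseteq> UNIV \<and> A \<noteq> {} \<and> (\<exists>b\<in>UNIV. \<forall>a\<in>A. a \<le> b)" using assms by blast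
  from dcU[unfolded dedekind_complete_on_def, rule_format, OF this] show ?thesis by simp
qed

lemma arch: fixes x y :: 'a assumes "\<forall>n::nat. real n *\<^sub>R x \<le> y" shows "x \<le> 0"
proof -
  define A where "A = {real n *\<^sub>R rpos x | n. True}"
  have ub: "\<forall>a\<in>A. a \<le> rpos y"
  proof
    fix a assume "a \<in> A" then obtain n where a: "a = real n *\<^sub>R rpos x" by (auto simp: A_def)
    have "a = rpos (real n *\<^sub>R x)" using a by (simp add: rpos_scale)
    also have "\<dots> \<le> rpos y" using assms by (simp add: rpos_mono)
    finally show "a \<le> rpos y" .
  qed
  have "A \<noteq> {}" by (auto simp: A_def)
  then obtain s where s: "is_sup_in UNIV A s" using dc_UNIV_ex ub by blast
  have "\<forall>a\<in>A. a \<le> s - rpos x"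
  proof
    fix a assume "a \<in> A" then obtain n where a: "a = real n *\<^sub>R rpos x" by (auto simp: A_def)
    have "real (Suc n) *\<^sub>R rpos x \<in> A" unfolding A_def by blast
    then have "real (Suc n) *\<^sub>R rpos x \<le> s" using s by (simp add: is_sup_in_def)
    moreover have "real (Suc n) *\<^sub>R rpos x = a + rpos x" using a by (simp add: algebra_simps)
    ultimately show "a \<le> s - rpos x" by (simp add: le_diff_eq)
  qed
  then have "s \<le> s - rpos x" using s by (simp add: is_sup_in_def)
  then have "rpos x \<le> 0" by simp
  then have "rpos x = 0" using rpos_ge0[of x] by (rule order.antisym)
  then show "x \<le> 0" using le_rpos[of x] by simp
qed

lemma arch2: fixes x y :: 'a assumes "\<And>n::nat. n \<ge> 1 \<Longrightarrow> x \<le> (1 / real n) *\<^sub>R y" shows "x \<le> 0"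
proof (rule arch[of x "rpos y"], intro allI)
  fix n :: nat
  show "real n *\<^sub>R x \<le> rpos y"
  proof (cases "n = 0")
    case True then show ?thesis by simp
  next
    case False
    then have "x \<le> (1 / real n) *\<^sub>R y" using assms by simp
    then have "real n *\<^sub>R x \<le> real n *\<^sub>R ((1 / real n) *\<^sub>R y)" by (rule scaleR_left_mono) simp
    also have "\<dots> = y" using False by simp
    finally show ?thesis using le_rpos[of y] by (rule order_trans)
  qed
qed

subsection \<open>components\<close>

lemma comp_compl: "iscomp e c \<Longrightarrow> iscomp e (e - c)"
  by (simp add: iscomp_def inf_commute)

lemma comp_ge0: "iscomp e c \<Longrightarrow> 0 \<le> c" by (simp add: iscomp_def)
lemma comp_le_e: "iscomp e c \<Longrightarrow> c \<le> e" by (simp add: iscomp_def)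

lemma comp_mul_compl: assumes "iscomp e c" shows "mul c (e - c) = 0" "mul (e - c) c = 0"
proof -
  have h: "0 \<le> c" "0 \<le> e - c" "inf c (e - c) = 0" using assms by (auto simp: iscomp_def)
  show "mul c (e - c) = 0" using mul_disj_zero[OF h] .
  have "inf (e - c) c = 0" using h(3) by (simp add: inf_commute)
  then show "mul (e - c) c = 0" using mul_disj_zero h by blast
qed

lemma comp_idem: assumes "iscomp e c" shows "mul c c = c"
proof -
  have "c = mul c e" by simp
  also have "\<dots> = mul c (c + (e - c))" by simp
  also have "\<dots> = mul c c" by (simp only: mul_add_r comp_mul_compl[OF assms] add_0_right)
  finally show ?thesis by simp
qed

lemma comp_le: assumes "iscomp e c" "0 \<le> x" shows "mul c x \<le> x" "0 \<le> mul c x"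
proof -
  have "mul c x \<le> mul e x" using assms by (intro mul_mono_l) (auto simp: iscomp_def)
  then show "mul c x \<le> x" by simp
  show "0 \<le> mul c x" using assms by (intro mul_nonneg) (auto simp: iscomp_def)
qed

lemma comp_comm_pos: assumes "iscomp e c" "0 \<le> x" shows "mul c x = mul x c"
proof -
  have h: "0 \<le> c" "0 \<le> e - c" "inf c (e - c) = 0" using assms by (auto simp: iscomp_def)
  have ax: "inf (mul x c) (e - c) = 0" "inf (mul c x) (e - c) = 0"
    using mul_ax[OF h(3) assms(2)] by auto
  have p1: "0 \<le> mul x c" "0 \<le> mul c x" using h assms by (auto intro: mul_nonneg)
  have "inf (e - c) (mul x c) = 0" using ax(1) by (simp add: inf_commute)
  then have z1: "mul (e - c) (mul x c) = 0" using mul_disj_zero h(2) p1(1) by blast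
  have z2: "mul (mul c x) (e - c) = 0" using mul_disj_zero p1(2) h(2) ax(2) by blast
  have "mul x c = mul (c + (e - c)) (mul x c)" by simp
  also have "\<dots> = mul c (mul x c)" by (simp only: mul_add_l z1 add_0_right)
  finally have 1: "mul x c = mul c (mul x c)" .
  have "mul c x = mul (mul c x) (c + (e - c))" by simp
  also have "\<dots> = mul (mul c x) c" by (simp only: mul_add_r z2 add_0_right)
  also have "\<dots> = mul c (mul x c)" by (simp add: mul_assoc)
  finally show ?thesis using 1 by simp
qed

lemma comp_comm: assumes "iscomp e c" shows "mul c x = mul x c"
proof -
  have "mul c x = mul c (rpos x) - mul c (rneg x)" by (rule mul_split_r)
  also have "\<dots> = mul (rpos x) c - mul (rneg x) c" using comp_comm_pos[OF assms] by simp
  also have "\<dots> = mul x c" by (simp flip: mul_split)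
  finally show ?thesis .
qed

lemma comp_inf: assumes "iscomp e c" "iscomp e d" shows "mul c d = inf c d"
proof (rule order.antisym)
  have "mul c d \<le> mul c e" using assms by (intro mul_mono_r) (auto simp: iscomp_def)
  moreover have "mul c d \<le> mul e d" using assms by (intro mul_mono_l) (auto simp: iscomp_def)
  ultimately show "mul c d \<le> inf c d" by simp
  have i0: "0 \<le> inf c d" using assms by (simp add: iscomp_def)
  have "mul (e - c) (inf c d) \<le> mul (e - c) c" using assms by (intro mul_mono_r) (auto simp: iscomp_def)
  then have "mul (e - c) (inf c d) \<le> 0" using comp_mul_compl[OF assms(1)] by simp
  moreover have "0 \<le> mul (e - c) (inf c d)" using assms i0 by (intro mul_nonneg) (auto simp: iscomp_def)
  ultimately have z: "mul (e - c) (inf c d) = 0" by simp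
  have "inf c d = mul (c + (e - c)) (inf c d)" by simp
  also have "\<dots> = mul c (inf c d)" by (simp only: mul_add_l z add_0_right)
  also have "\<dots> \<le> mul c d" using assms by (intro mul_mono_r) (auto simp: iscomp_def)
  finally show "inf c d \<le> mul c d" .
qed

lemma comp_inf_comp: assumes "iscomp e c" "iscomp e d" shows "iscomp e (inf c d)"
proof -
  have c: "0 \<le> c" "c \<le> e" "inf c (e - c) = 0" using assms(1) by (auto simp: iscomp_def)
  have d: "0 \<le> d" "d \<le> e" "inf d (e - d) = 0" using assms(2) by (auto simp: iscomp_def)
  define x where "x = inf c d"
  have x0: "0 \<le> x" using c d by (simp add: x_def)
  have xc: "x \<le> c" "x \<le> d" by (simp_all add: x_def)
  have ec: "0 \<le> e - c" "0 \<le> e - d" using c d by simp_all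
  have h1: "inf x (e - c) = 0" by (rule disj_mono[OF c(3) x0 xc(1) ec(1) order_refl])
  have h2: "inf x (e - d) = 0" by (rule disj_mono[OF d(3) x0 xc(2) ec(2) order_refl])
  have s: "inf x ((e - c) + (e - d)) = 0" by (rule disj_sum[OF x0 ec h1 h2])
  have "e - x = sup (e - c) (e - d)" unfolding x_def by (rule minus_inf)
  also have "\<dots> \<le> (e - c) + (e - d)" by (rule sup_least) (simp_all add: c(2) d(2))
  finally have le: "e - x \<le> (e - c) + (e - d)" .
  have ex: "0 \<le> e - x" using order_trans[OF xc(1) c(2)] by simp
  have "inf x (e - x) = 0" by (rule disj_mono[OF s x0 order_refl ex le])
  moreover have "x \<le> e" using order_trans[OF xc(1) c(2)] .
  ultimately show ?thesis using x0 unfolding iscomp_def x_def[symmetric] by simp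
qed

lemma comp_diff: assumes "iscomp e c" "iscomp e d" "d \<le> c"
  shows "c - d = mul c (e - d)" "iscomp e (c - d)"
proof -
  have "mul c d = d" using comp_inf[OF assms(1,2)] assms(3) by (simp add: inf_absorb2)
  then show 1: "c - d = mul c (e - d)" by (simp add: mul_diff_r)
  have "mul c (e - d) = inf c (e - d)" using comp_inf[OF assms(1) comp_compl[OF assms(2)]] .
  then show "iscomp e (c - d)" using 1 comp_inf_comp[OF assms(1) comp_compl[OF assms(2)]] by simp
qed

subsection \<open>The component generated by the positive part\<close>

definition cset :: "'a \<Rightarrow> 'a set" where "cset x = {inf (real n *\<^sub>R rpos x) e | n. True}"
definition cmp :: "'a \<Rightarrow> 'a" where "cmp x = (THE s. is_sup_in UNIV (cset x) s)"

lemma cmp_sup: "is_sup_in UNIV (cset x) (cmp x)"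
proof -
  have "cset x \<noteq> {}" "\<forall>a\<in>cset x. a \<le> e" by (auto simp: cset_def)
  then obtain s where s: "is_sup_in UNIV (cset x) s" using dc_UNIV_ex[of "cset x" e] by blast
  have u: "\<And>t. is_sup_in UNIV (cset x) t \<Longrightarrow> t = s" by (rule is_sup_unique[OF _ s])
  have "cmp x = s" unfolding cmp_def by (rule the_equality) (rule s, rule u)
  then show ?thesis using s by simp
qed

lemma cmp_ub: "inf (real n *\<^sub>R rpos x) e \<le> cmp x"
  using cmp_sup[of x] unfolding is_sup_in_def cset_def by blast

lemma cmp_least: "(\<And>n. inf (real n *\<^sub>R rpos x) e \<le> b) \<Longrightarrow> cmp x \<le> b"
  using cmp_sup[of x] unfolding is_sup_in_def cset_def by blast

lemma cmp_ge0: "0 \<le> cmp x" using cmp_ub[of 0 x] e_ge0 by (simp add: inf_absorb1)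
lemma cmp_le_e: "cmp x \<le> e" by (rule cmp_least) simp

lemma cmp_disj: "inf (rpos x) (e - cmp x) = 0"
proof -
  define y where "y = inf (rpos x) (e - cmp x)"
  have y0: "0 \<le> y" using cmp_le_e by (simp add: y_def le_diff_eq)
  have Y: "real n *\<^sub>R y \<le> e" for n
  proof (induction n)
    case 0 then show ?case using e_ge0 by simp
  next
    case (Suc n)
    have "real n *\<^sub>R y \<le> real n *\<^sub>R rpos x" by (rule scaleR_left_mono) (auto simp: y_def)
    then have "real n *\<^sub>R y \<le> inf (real n *\<^sub>R rpos x) e" using Suc by simp
    also have "\<dots> \<le> cmp x" by (rule cmp_ub)
    finally have 1: "real n *\<^sub>R y \<le> cmp x" .
    have 2: "y \<le> e - cmp x" by (simp add: y_def)
    have "real (Suc n) *\<^sub>R y = real n *\<^sub>R y + y" by (simp add: algebra_simps)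
    also have "\<dots> \<le> cmp x + (e - cmp x)" using 1 2 by (rule add_mono)
    finally show ?case by simp
  qed
  have "y \<le> 0" by (rule arch[of y e]) (use Y in blast)
  then have "y = 0" using y0 by (rule order.antisym)
  then show ?thesis by (simp add: y_def)
qed

lemma cset_disj: assumes "inf (rpos x) z = 0" "0 \<le> z" "a \<in> cset x" shows "0 \<le> a \<and> inf a z = 0"
proof -
  obtain n where a: "a = inf (real n *\<^sub>R rpos x) e" using assms(3) by (auto simp: cset_def)
  have "inf (real n *\<^sub>R rpos x) z = 0" using assms by (intro disj_scale) auto
  moreover have "0 \<le> a" using a e_ge0 by (simp add: scaleR_nonneg_nonneg)
  moreover have "a \<le> real n *\<^sub>R rpos x" using a by simp
  ultimately show ?thesis using assms(2) by (auto intro: disj_mono)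
qed

lemma comp_cmp: "iscomp e (cmp x)"
proof -
  have z: "0 \<le> e - cmp x" using cmp_le_e[of x] by simp
  have "inf (cmp x) (e - cmp x) = 0"
  proof (rule sup_disj[OF cmp_sup cmp_ge0 z])
    fix a assume "a \<in> cset x"
    then show "0 \<le> a \<and> inf a (e - cmp x) = 0" using cset_disj[OF cmp_disj z] by blast
  qed
  then show ?thesis using cmp_ge0 cmp_le_e by (simp add: iscomp_def)
qed

lemma cmp_neg_disj: "inf (cmp x) (rneg x) = 0"
proof (rule sup_disj[OF cmp_sup cmp_ge0 rneg_ge0])
  fix a assume "a \<in> cset x"
  then show "0 \<le> a \<and> inf a (rneg x) = 0" using cset_disj[OF rpos_rneg_disj rneg_ge0] by blast
qed

lemma cmp_mul: "mul (cmp x) x = rpos x"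
proof -
  have "inf (e - cmp x) (rpos x) = 0" using cmp_disj[of x] by (simp add: inf_commute)
  then have z1: "mul (e - cmp x) (rpos x) = 0" using cmp_le_e[of x]
    by (intro mul_disj_zero) (auto simp: le_diff_eq)
  have z2: "mul (cmp x) (rneg x) = 0" using cmp_neg_disj[of x] cmp_ge0[of x] by (intro mul_disj_zero) auto
  have "rpos x = mul (cmp x + (e - cmp x)) (rpos x)" by simp
  also have "\<dots> = mul (cmp x) (rpos x)" by (simp only: mul_add_l z1 add_0_right)
  finally have "mul (cmp x) (rpos x) = rpos x" by simp
  then show ?thesis using z2 mul_split_r[of "cmp x" x] by simp
qed

lemma cmp_mul_compl: "mul (e - cmp x) x = - rneg x"
proof -
  have "mul (e - cmp x) x = x - rpos x" by (simp add: mul_diff_l cmp_mul)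
  also have "\<dots> = - rneg x" by (subst (1) rprts[of x]) simp
  finally show ?thesis .
qed

lemma cmp_mono: "rpos x \<le> rpos y \<Longrightarrow> cmp x \<le> cmp y"
proof (rule cmp_least)
  fix n assume "rpos x \<le> rpos y"
  then have "inf (real n *\<^sub>R rpos x) e \<le> inf (real n *\<^sub>R rpos y) e"
    by (intro inf_mono scaleR_left_mono) auto
  also have "\<dots> \<le> cmp y" by (rule cmp_ub)
  finally show "inf (real n *\<^sub>R rpos x) e \<le> cmp y" .
qed

lemma cmp_full: assumes "e \<le> real m *\<^sub>R rpos x" shows "cmp x = e"
proof (rule order.antisym)
  show "cmp x \<le> e" by (rule cmp_le_e)
  have "inf (real m *\<^sub>R rpos x) e = e" using assms by (simp add: inf_absorb2)
  then show "e \<le> cmp x" using cmp_ub[of m x] by simp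
qed

end



context fsetting begin

definition Pl :: "'a \<Rightarrow> real \<Rightarrow> 'a" where "Pl k t = cmp (k - t *\<^sub>R e)"

lemma Pl_comp: "iscomp e (Pl k t)" by (simp add: Pl_def comp_cmp)

lemma Pl_lower: "t *\<^sub>R Pl k t \<le> mul (Pl k t) k"
proof -
  have "mul (Pl k t) (k - t *\<^sub>R e) = rpos (k - t *\<^sub>R e)" by (simp add: Pl_def cmp_mul)
  moreover have "mul (Pl k t) (k - t *\<^sub>R e) = mul (Pl k t) k - t *\<^sub>R Pl k t"
    by (simp add: mul_diff_r mul_scale_r)
  ultimately have "0 \<le> mul (Pl k t) k - t *\<^sub>R Pl k t" by (metis rpos_ge0)
  then show ?thesis by simp
qed

lemma Pl_upper: "mul (e - Pl k t) k \<le> t *\<^sub>R (e - Pl k t)"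
proof -
  have "mul (e - Pl k t) (k - t *\<^sub>R e) = - rneg (k - t *\<^sub>R e)" by (simp add: Pl_def cmp_mul_compl)
  moreover have "mul (e - Pl k t) (k - t *\<^sub>R e) = mul (e - Pl k t) k - t *\<^sub>R (e - Pl k t)"
    by (simp add: mul_diff_r mul_scale_r)
  ultimately have "mul (e - Pl k t) k - t *\<^sub>R (e - Pl k t) \<le> 0" by (metis neg_le_0_iff_le rneg_ge0)
  then show ?thesis by simp
qed

lemma Pl_anti: assumes "s \<le> t" shows "Pl k t \<le> Pl k s"
proof -
  have "s *\<^sub>R e \<le> t *\<^sub>R e" using assms e_ge0 by (rule scaleR_right_mono)
  then have "k - t *\<^sub>R e \<le> k - s *\<^sub>R e" by simp
  then show ?thesis unfolding Pl_def by (intro cmp_mono rpos_mono)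
qed

lemma Pl_level: assumes "s \<le> t"
  shows "iscomp e (Pl k s - Pl k t)" "s *\<^sub>R (Pl k s - Pl k t) \<le> mul (Pl k s - Pl k t) k"
    "mul (Pl k s - Pl k t) k \<le> t *\<^sub>R (Pl k s - Pl k t)"
proof -
  have le: "Pl k t \<le> Pl k s" using Pl_anti[OF assms] .
  note cd = comp_diff[OF Pl_comp Pl_comp le]
  show "iscomp e (Pl k s - Pl k t)" by (rule cd(2))
  have r: "Pl k s - Pl k t = mul (Pl k s) (e - Pl k t)" by (rule cd(1))
  have "mul (Pl k s - Pl k t) k = mul (Pl k s) (mul (e - Pl k t) k)" by (simp only: r mul_assoc)
  also have "\<dots> \<le> mul (Pl k s) (t *\<^sub>R (e - Pl k t))"
    by (rule mul_mono_r[OF comp_ge0[OF Pl_comp] Pl_upper])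
  also have "\<dots> = t *\<^sub>R (Pl k s - Pl k t)" by (simp only: mul_scale_r r)
  finally show "mul (Pl k s - Pl k t) k \<le> t *\<^sub>R (Pl k s - Pl k t)" .
  have r2: "Pl k s - Pl k t = mul (e - Pl k t) (Pl k s)"
    using r comp_comm[OF comp_compl[OF Pl_comp], of k t "Pl k s"] by simp
  have "s *\<^sub>R (Pl k s - Pl k t) = mul (e - Pl k t) (s *\<^sub>R Pl k s)" by (simp only: r2 mul_scale_r)
  also have "\<dots> \<le> mul (e - Pl k t) (mul (Pl k s) k)"
    by (rule mul_mono_r[OF comp_ge0[OF comp_compl[OF Pl_comp]] Pl_lower])
  also have "\<dots> = mul (Pl k s - Pl k t) k" by (simp only: r2 mul_assoc)
  finally show "s *\<^sub>R (Pl k s - Pl k t) \<le> mul (Pl k s - Pl k t) k" .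
qed

lemma Pl_small: assumes "0 \<le> k" "0 < t" shows "Pl k t \<le> (1 / t) *\<^sub>R k"
proof -
  have "t *\<^sub>R Pl k t \<le> k" using Pl_lower[of t k] comp_le(1)[OF Pl_comp assms(1)] by (rule order_trans)
  then have "(1 / t) *\<^sub>R (t *\<^sub>R Pl k t) \<le> (1 / t) *\<^sub>R k" by (rule scaleR_left_mono) (use assms in simp)
  then show ?thesis using assms by simp
qed

lemma Pl_neg: assumes "0 \<le> k" "t < 0" shows "Pl k t = e"
proof -
  define m where "m = nat (ceiling (1 / (- t)))"
  have "1 / (- t) \<le> real m" unfolding m_def by linarith
  then have m1: "1 \<le> real m * (- t)" using assms(2) by (simp add: field_simps)
  have "(- t) *\<^sub>R e \<le> k - t *\<^sub>R e" using assms(1) by simp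
  then have a0: "rpos ((- t) *\<^sub>R e) \<le> rpos (k - t *\<^sub>R e)" by (rule rpos_mono)
  have p: "0 \<le> (- t) *\<^sub>R e" using assms(2) e_ge0 by (intro scaleR_nonneg_nonneg) auto
  have a: "(- t) *\<^sub>R e \<le> rpos (k - t *\<^sub>R e)" using a0 unfolding rpos_id[OF p] .
  have "e = 1 *\<^sub>R e" by simp
  also have "\<dots> \<le> (real m * (- t)) *\<^sub>R e" using m1 e_ge0 by (rule scaleR_right_mono)
  also have "\<dots> = real m *\<^sub>R ((- t) *\<^sub>R e)" by simp
  also have "\<dots> \<le> real m *\<^sub>R rpos (k - t *\<^sub>R e)" using a by (rule scaleR_left_mono) simp
  finally show ?thesis unfolding Pl_def by (rule cmp_full)
qed

lemma layer:
  assumes k0: "0 \<le> k" and Z0: "0 \<le> Z"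
    and H: "\<And>s t. s \<le> t \<Longrightarrow> rabs (mul (Pl k s - Pl k t) D) \<le> (t - s) *\<^sub>R mul (Pl k s - Pl k t) Z"
  shows "D = 0"
proof -
  have key: "rabs D \<le> (1 / real n) *\<^sub>R Z" if n1: "n \<ge> 1" for n :: nat
  proof -
    define Q where "Q i = Pl k ((real i - 1) / real n)" for i :: nat
    have Q0: "Q 0 = e" unfolding Q_def using n1 by (intro Pl_neg[OF k0]) simp
    have C: "rabs (mul (e - Q M) D) \<le> (1 / real n) *\<^sub>R mul (e - Q M) Z" for M
    proof (induction M)
      case 0 show ?case by (simp add: Q0)
    next
      case (Suc M)
      define s where "s = (real M - 1) / real n"
      define t where "t = (real (Suc M) - 1) / real n"
      have st: "s \<le> t" using n1 by (simp add: s_def t_def divide_right_mono)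
      have tms: "t - s = 1 / real n" using n1 by (simp add: s_def t_def diff_divide_distrib)
      have QM: "Q M = Pl k s" "Q (Suc M) = Pl k t" by (simp_all add: Q_def s_def t_def)
      have dec: "e - Q (Suc M) = (e - Q M) + (Q M - Q (Suc M))" by simp
      have h: "rabs (mul (Q M - Q (Suc M)) D) \<le> (1 / real n) *\<^sub>R mul (Q M - Q (Suc M)) Z"
        using H[OF st] unfolding QM tms .
      have "rabs (mul (e - Q (Suc M)) D) = rabs (mul (e - Q M) D + mul (Q M - Q (Suc M)) D)"
        by (simp only: dec mul_add_l)
      also have "\<dots> \<le> rabs (mul (e - Q M) D) + rabs (mul (Q M - Q (Suc M)) D)" by (rule rabs_triangle)
      also have "\<dots> \<le> (1 / real n) *\<^sub>R mul (e - Q M) Z + (1 / real n) *\<^sub>R mul (Q M - Q (Suc M)) Z"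
        using Suc.IH h by (rule add_mono)
      also have "\<dots> = (1 / real n) *\<^sub>R mul (e - Q (Suc M)) Z" by (simp only: dec mul_add_l scaleR_add_right)
      finally show ?case .
    qed
    have T: "rabs D - (1 / real n) *\<^sub>R Z \<le> (1 / real j) *\<^sub>R mul k (rabs D)" if j1: "j \<ge> 1" for j :: nat
    proof -
      define M where "M = j * n + 1"
      have tM: "(real M - 1) / real n = real j" using n1 by (simp add: M_def)
      have QM: "Q M = Pl k (real j)" by (simp add: Q_def tM)
      have jpos: "0 < real j" using j1 by simp
      have cQ: "iscomp e (Q M)" by (simp add: QM Pl_comp)
      have eqD: "D = mul (e - Q M) D + mul (Q M) D" by (simp flip: mul_add_l)
      have "rabs D = rabs (mul (e - Q M) D + mul (Q M) D)" using arg_cong[OF eqD, of rabs] .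
      also have "\<dots> \<le> rabs (mul (e - Q M) D) + rabs (mul (Q M) D)" by (rule rabs_triangle)
      finally have 0: "rabs D \<le> rabs (mul (e - Q M) D) + rabs (mul (Q M) D)" .
      have "rabs (mul (Q M) D) = mul (Q M) (rabs D)" by (rule rabs_mul_l(1)[OF comp_ge0[OF cQ]])
      also have "\<dots> \<le> mul ((1 / real j) *\<^sub>R k) (rabs D)"
        using Pl_small[OF k0 jpos] unfolding QM[symmetric] by (rule mul_mono_l[OF rabs_ge0, rotated])
      also have "\<dots> = (1 / real j) *\<^sub>R mul k (rabs D)" by (rule mul_scale_l)
      finally have 1: "rabs (mul (Q M) D) \<le> (1 / real j) *\<^sub>R mul k (rabs D)" .
      have "rabs (mul (e - Q M) D) \<le> (1 / real n) *\<^sub>R mul (e - Q M) Z" by (rule C)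
      also have "\<dots> \<le> (1 / real n) *\<^sub>R Z"
        by (rule scaleR_left_mono[OF comp_le(1)[OF comp_compl[OF cQ] Z0]]) simp
      finally have 2: "rabs (mul (e - Q M) D) \<le> (1 / real n) *\<^sub>R Z" .
      have "rabs D \<le> (1 / real n) *\<^sub>R Z + (1 / real j) *\<^sub>R mul k (rabs D)"
        using 0 add_mono[OF 2 1] by (rule order_trans)
      then show ?thesis by (simp add: algebra_simps)
    qed
    have "rabs D - (1 / real n) *\<^sub>R Z \<le> 0" by (rule arch2[of _ "mul k (rabs D)"]) (rule T)
    then show ?thesis by simp
  qed
  have "rabs D \<le> 0" by (rule arch2[of _ Z]) (rule key)
  then show "D = 0" by (rule rabs_le0)
qed

end



context fsetting begin

lemma mul_comm_pos: assumes k0: "0 \<le> k" shows "mul k y = mul y k"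
proof -
  have "mul k y - mul y k = 0"
  proof (rule layer[OF k0, of "2 *\<^sub>R rabs y"])
    show "0 \<le> 2 *\<^sub>R rabs y" by (rule scaleR_nonneg_nonneg) simp_all
    fix s t :: real assume st: "s \<le> t"
    define r where "r = Pl k s - Pl k t"
    have lv: "iscomp e r" "s *\<^sub>R r \<le> mul r k" "mul r k \<le> t *\<^sub>R r"
      using Pl_level[OF st, of k] by (simp_all add: r_def)
    define d where "d = mul r k - s *\<^sub>R r"
    have d0: "0 \<le> d" using lv(2) by (simp add: d_def)
    have d1: "d \<le> (t - s) *\<^sub>R r" using lv(3) by (simp add: d_def scaleR_diff_left)
    have m: "mul r k = s *\<^sub>R r + d" by (simp add: d_def)
    have c1: "mul r (mul k y) = mul (mul r k) y" by (simp only: mul_assoc)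
    have c2: "mul r (mul y k) = mul y (mul r k)"
    proof -
      have "mul r (mul y k) = mul (mul y k) r" by (rule comp_comm[OF lv(1)])
      also have "\<dots> = mul y (mul k r)" by (rule mul_assoc)
      also have "mul k r = mul r k" by (rule comp_comm[OF lv(1), symmetric])
      finally show ?thesis .
    qed
    have ry: "mul r y = mul y r" by (rule comp_comm[OF lv(1)])
    have "mul r (mul k y - mul y k) = mul (mul r k) y - mul y (mul r k)"
      by (simp only: mul_diff_r c1 c2)
    also have "\<dots> = mul d y - mul y d"
      by (simp add: m mul_add_l mul_add_r mul_scale_l mul_scale_r ry)
    finally have eq: "mul r (mul k y - mul y k) = mul d y - mul y d" .
    have "rabs (mul d y - mul y d) \<le> rabs (mul d y) + rabs (mul y d)" by (rule rabs_diff_le)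
    also have "\<dots> = mul d (rabs y) + mul (rabs y) d" by (simp add: rabs_mul rabs_id[OF d0])
    also have "\<dots> \<le> mul ((t - s) *\<^sub>R r) (rabs y) + mul (rabs y) ((t - s) *\<^sub>R r)"
      by (intro add_mono mul_mono_l mul_mono_r d1 rabs_ge0)
    also have "\<dots> = (t - s) *\<^sub>R mul r (2 *\<^sub>R rabs y)"
      by (simp add: mul_scale_l mul_scale_r mul_add_r comp_comm[OF lv(1), of "rabs y"] scaleR_2 scaleR_add_right)
    finally show "rabs (mul (Pl k s - Pl k t) (mul k y - mul y k)) \<le> (t - s) *\<^sub>R mul (Pl k s - Pl k t) (2 *\<^sub>R rabs y)"
      using eq by (simp add: r_def)
  qed
  then show ?thesis by simp
qed

lemma mul_comm: "mul x y = mul y x"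
proof -
  have "mul x y = mul (rpos x) y - mul (rneg x) y" by (rule mul_split)
  also have "\<dots> = mul y (rpos x) - mul y (rneg x)" by (simp only: mul_comm_pos[OF rpos_ge0] mul_comm_pos[OF rneg_ge0])
  also have "\<dots> = mul y x" by (simp flip: mul_split_r)
  finally show ?thesis .
qed

subsection \<open>E is an ideal\<close>

lemma E_riesz: "riesz_subspace E" using uc by (simp add: is_universal_completion_of_def)
lemma E_dense: "order_dense E" using uc by (simp add: is_universal_completion_of_def)
lemma E_0: "0 \<in> E" using E_riesz by (simp add: riesz_subspace_def)
lemma E_add: "x \<in> E \<Longrightarrow> y \<in> E \<Longrightarrow> x + y \<in> E" using E_riesz by (simp add: riesz_subspace_def)
lemma E_scale: "x \<in> E \<Longrightarrow> c *\<^sub>R x \<in> E" using E_riesz by (simp add: riesz_subspace_def)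
lemma E_sup: "x \<in> E \<Longrightarrow> y \<in> E \<Longrightarrow> sup x y \<in> E" using E_riesz by (simp add: riesz_subspace_def)
lemma E_inf: "x \<in> E \<Longrightarrow> y \<in> E \<Longrightarrow> inf x y \<in> E" using E_riesz by (simp add: riesz_subspace_def)
lemma E_uminus: "x \<in> E \<Longrightarrow> - x \<in> E" using E_scale[of x "-1"] by simp
lemma E_diff: "x \<in> E \<Longrightarrow> y \<in> E \<Longrightarrow> x - y \<in> E" using E_add[of x "-y"] E_uminus[of y] by simp
lemma E_rabs: "x \<in> E \<Longrightarrow> rabs x \<in> E" unfolding rabs_def by (intro E_sup E_uminus)
lemma E_rpos: "x \<in> E \<Longrightarrow> rpos x \<in> E" unfolding rpos_def by (intro E_sup E_0)
lemma E_rneg: "x \<in> E \<Longrightarrow> rneg x \<in> E" unfolding rneg_def by (intro E_sup E_0 E_uminus)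

lemma E_ideal_pos: assumes xE: "x \<in> E" and y0: "0 \<le> y" and yx: "y \<le> x" shows "y \<in> E"
proof -
  define A where "A = {z \<in> E. 0 \<le> z \<and> z \<le> y}"
  have "A \<subseteq> E \<and> A \<noteq> {} \<and> (\<exists>b\<in>E. \<forall>a\<in>A. a \<le> b)"
    using E_0 y0 xE yx by (auto simp: A_def intro!: bexI[of _ x] intro: order_trans)
  then obtain s where s: "is_sup_in E A s" using dcE unfolding dedekind_complete_on_def by blast
  have sE: "s \<in> E" using s by (simp add: is_sup_in_def)
  have 0: "0 \<in> A" using E_0 y0 by (simp add: A_def)
  have s0: "0 \<le> s" using s 0 by (simp add: is_sup_in_def)
  have sy: "s \<le> y"
  proof (rule ccontr)
    assume ns: "\<not> s \<le> y"
    define u where "u = rpos (s - y)"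
    have "u \<noteq> 0"
    proof
      assume "u = 0"
      then have "s - y \<le> 0" using le_rpos[of "s - y"] by (simp add: u_def)
      then show False using ns by simp
    qed
    then have "0 < u" by (simp add: u_def order.strict_iff_order)
    then obtain z where z: "z \<in> E" "0 < z" "z \<le> u" using E_dense unfolding order_dense_def by blast
    have "\<forall>a\<in>A. a \<le> s - z"
    proof
      fix a assume a: "a \<in> A"
      have "a \<le> s" using s a by (simp add: is_sup_in_def)
      moreover have "a \<le> y" using a by (simp add: A_def)
      ultimately have "a \<le> inf s y" by simp
      also have "inf s y = s - u" using sub_inf_rpos[of s y] by (simp add: u_def algebra_simps)
      also have "s - u \<le> s - z" using z(3) by simp
      finally show "a \<le> s - z" .
    qed
    then have "s \<le> s - z" using s E_diff[OF sE z(1)] by (simp add: is_sup_in_def)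
    then show False using z(2) by simp
  qed
  have ys: "y \<le> s"
  proof (rule ccontr)
    assume ny: "\<not> y \<le> s"
    have "0 < y - s" using sy ny by (simp add: order.strict_iff_order)
    then obtain z where z: "z \<in> E" "0 < z" "z \<le> y - s" using E_dense unfolding order_dense_def by blast
    have "s + z \<in> A" using E_add[OF sE z(1)] s0 z by (simp add: A_def le_diff_eq add.commute add_nonneg_nonneg)
    then have "s + z \<le> s" using s unfolding is_sup_in_def by blast
    then show False using z(2) by simp
  qed
  have "y = s" using sy ys by simp
  then show ?thesis using sE by simp
qed

lemma E_ideal: assumes "x \<in> E" "rabs y \<le> rabs x" shows "y \<in> E"
proof -
  have "rpos y \<in> E" using E_ideal_pos[OF E_rabs[OF assms(1)] rpos_ge0 order_trans[OF rpos_le_rabs assms(2)]] .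
  moreover have "rneg y \<in> E" using E_ideal_pos[OF E_rabs[OF assms(1)] rneg_ge0 order_trans[OF rneg_le_rabs assms(2)]] .
  ultimately have "rpos y - rneg y \<in> E" by (rule E_diff)
  then show ?thesis by (simp flip: rprts)
qed

lemma E_ideal_le: "x \<in> E \<Longrightarrow> 0 \<le> y \<Longrightarrow> y \<le> rabs x \<Longrightarrow> y \<in> E"
  by (rule E_ideal[of x]) (simp_all add: rabs_id)

end



locale cesetting = fsetting E mul e for E :: "'a::{ordered_real_vector,lattice} set" and mul e +
  fixes W :: "'a \<Rightarrow> 'a"
  assumes ce: "cond_exp E W" and We: "W e = e"
begin

lemma W_E: "x \<in> E \<Longrightarrow> W x \<in> E" using ce by (auto simp: cond_exp_def)
lemma W_add: "x \<in> E \<Longrightarrow> y \<in> E \<Longrightarrow> W (x + y) = W x + W y" using ce by (simp add: cond_exp_def linear_on_def)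
lemma W_scale: "x \<in> E \<Longrightarrow> W (c *\<^sub>R x) = c *\<^sub>R W x" using ce by (simp add: cond_exp_def linear_on_def)
lemma W_0: "W 0 = 0" using W_scale[OF E_0, of 0] by simp
lemma W_uminus: "x \<in> E \<Longrightarrow> W (- x) = - W x" using W_scale[of x "-1"] by simp
lemma W_diff: "x \<in> E \<Longrightarrow> y \<in> E \<Longrightarrow> W (x - y) = W x - W y"
  using W_add[of x "-y"] W_uminus[of y] E_uminus[of y] by simp
lemma W_pos: "x \<in> E \<Longrightarrow> 0 \<le> x \<Longrightarrow> 0 \<le> W x" using ce by (simp add: cond_exp_def positive_on_def)
lemma W_mono: "x \<in> E \<Longrightarrow> y \<in> E \<Longrightarrow> x \<le> y \<Longrightarrow> W x \<le> W y"
  using W_pos[of "y - x"] W_diff[of y x] E_diff[of y x] by simp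
lemma W_idem: "x \<in> E \<Longrightarrow> W (W x) = W x" using ce by (simp add: cond_exp_def)
lemma W_cont: "D \<subseteq> E \<Longrightarrow> D \<noteq> {} \<Longrightarrow> downdirected D \<Longrightarrow> is_inf_in E D 0 \<Longrightarrow> is_inf_in E (W ` D) 0"
  using ce unfolding cond_exp_def order_continuous_on_def by blast

definition inR :: "'a \<Rightarrow> bool" where "inR x \<longleftrightarrow> x \<in> E \<and> W x = x"

lemma inR_img: "x \<in> W ` E \<longleftrightarrow> inR x"
  by (auto simp: inR_def W_E W_idem intro!: image_eqI[of x W x])

lemma RW_riesz: "riesz_subspace (W ` E)" using ce by (simp add: cond_exp_def)
lemma inR_E: "inR x \<Longrightarrow> x \<in> E" by (simp add: inR_def)
lemma inR_W: "inR x \<Longrightarrow> W x = x" by (simp add: inR_def)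
lemma inR_e: "inR e" using We e_in by (simp add: inR_def)
lemma inR_0: "inR 0" using W_0 E_0 by (simp add: inR_def)
lemma inR_add: "inR x \<Longrightarrow> inR y \<Longrightarrow> inR (x + y)" by (simp add: inR_def W_add E_add)
lemma inR_diff: "inR x \<Longrightarrow> inR y \<Longrightarrow> inR (x - y)" by (simp add: inR_def W_diff E_diff)
lemma inR_scale: "inR x \<Longrightarrow> inR (c *\<^sub>R x)" by (simp add: inR_def W_scale E_scale)
lemma inR_sup: "inR x \<Longrightarrow> inR y \<Longrightarrow> inR (sup x y)"
  using RW_riesz unfolding riesz_subspace_def inR_img[symmetric] by blast
lemma inR_inf: "inR x \<Longrightarrow> inR y \<Longrightarrow> inR (inf x y)"
  using RW_riesz unfolding riesz_subspace_def inR_img[symmetric] by blast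
lemma inR_rpos: "inR x \<Longrightarrow> inR (rpos x)" unfolding rpos_def by (intro inR_sup inR_0)
lemma inR_rneg: "inR x \<Longrightarrow> inR (rneg x)" unfolding rneg_def by (intro inR_sup inR_0 inR_scale[of x "-1", simplified])

lemma W_cmp: assumes "inR x" shows "inR (cmp x)"
proof -
  define a where "a n = inf (real n *\<^sub>R rpos x) e" for n :: nat
  have aR: "inR (a n)" for n unfolding a_def by (rule inR_inf[OF inR_scale[OF inR_rpos[OF assms]] inR_e])
  have aE: "a n \<in> E" for n using aR by (simp add: inR_def)
  have cE: "cmp x \<in> E" using E_ideal_le[OF e_in cmp_ge0] cmp_le_e rabs_id[OF e_ge0] by simp
  have amono: "n \<le> m \<Longrightarrow> a n \<le> a m" for n m
    unfolding a_def by (intro inf_mono scaleR_right_mono) auto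
  have aub: "a n \<le> cmp x" for n unfolding a_def by (rule cmp_ub)
  define D where "D = range (\<lambda>n. cmp x - a n)"
  have DE: "D \<subseteq> E" using cE aE by (auto simp: D_def intro: E_diff)
  have Dne: "D \<noteq> {}" by (simp add: D_def)
  have Ddd: "downdirected D"
    unfolding downdirected_def D_def
  proof (intro ballI)
    fix u v assume "u \<in> range (\<lambda>n. cmp x - a n)" "v \<in> range (\<lambda>n. cmp x - a n)"
    then obtain n m where uv: "u = cmp x - a n" "v = cmp x - a m" by auto
    have "cmp x - a (max n m) \<le> u" "cmp x - a (max n m) \<le> v" using amono[of n "max n m"] amono[of m "max n m"] by (simp_all add: uv)
    then show "\<exists>c\<in>range (\<lambda>n. cmp x - a n). c \<le> u \<and> c \<le> v" by blast
  qed
  have Dinf: "is_inf_in E D 0"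
    unfolding is_inf_in_def
  proof (intro conjI ballI impI)
    show "0 \<in> E" by (rule E_0)
    fix d assume "d \<in> D" then show "0 \<le> d" using aub by (auto simp: D_def)
  next
    fix b assume bE: "b \<in> E" and lb: "\<forall>d\<in>D. b \<le> d"
    have "a n \<le> cmp x - b" for n
    proof -
      have "b \<le> cmp x - a n" using lb by (auto simp: D_def)
      from diff_left_mono[OF this, of "cmp x"] show ?thesis by simp
    qed
    then have "cmp x \<le> cmp x - b" unfolding a_def by (rule cmp_least)
    then show "b \<le> 0" by simp
  qed
  have WD: "is_inf_in E (W ` D) 0" by (rule W_cont[OF DE Dne Ddd Dinf])
  have Wd: "W (cmp x - a n) = W (cmp x) - a n" for n using W_diff[OF cE aE] aR by (simp add: inR_def)
  have "a n \<le> W (cmp x)" for n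
  proof -
    have "cmp x - a n \<in> D" by (auto simp: D_def)
    then have "0 \<le> W (cmp x - a n)" using WD unfolding is_inf_in_def by blast
    then show ?thesis by (simp add: Wd)
  qed
  then have 1: "cmp x \<le> W (cmp x)" unfolding a_def by (rule cmp_least)
  have "W (cmp x) - cmp x \<le> 0"
  proof -
    have "\<forall>d\<in>W ` D. W (cmp x) - cmp x \<le> d"
      using aub by (auto simp: D_def Wd)
    moreover have "W (cmp x) - cmp x \<in> E" using W_E[OF cE] cE by (rule E_diff)
    ultimately show ?thesis using WD unfolding is_inf_in_def by blast
  qed
  then show ?thesis using 1 cE by (simp add: inR_def)
qed

lemma trunc_inf: assumes fE: "f \<in> E" and f0: "0 \<le> f"
  shows "is_inf_in E (range (\<lambda>m::nat. rpos (f - real m *\<^sub>R e))) 0"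
  unfolding is_inf_in_def
proof (intro conjI ballI impI)
  show "0 \<in> E" by (rule E_0)
  fix d assume "d \<in> range (\<lambda>m::nat. rpos (f - real m *\<^sub>R e))" then show "0 \<le> d" by auto
next
  fix b assume bE: "b \<in> E" and lb: "\<forall>d\<in>range (\<lambda>m::nat. rpos (f - real m *\<^sub>R e)). b \<le> d"
  define w where "w = inf (rpos b) e"
  have w0: "0 \<le> w" using e_ge0 by (simp add: w_def)
  have wle: "w \<le> e" by (simp add: w_def)
  have wg: "w \<le> f - inf f (real m *\<^sub>R e)" for m :: nat
  proof -
    have "b \<le> rpos (f - real m *\<^sub>R e)" using lb by blast
    then have "rpos b \<le> rpos (rpos (f - real m *\<^sub>R e))" by (rule rpos_mono)
    then have "rpos b \<le> rpos (f - real m *\<^sub>R e)" by (simp only: rpos_id[OF rpos_ge0])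
    then have "w \<le> rpos (f - real m *\<^sub>R e)" unfolding w_def by (rule le_infI1)
    then show ?thesis by (simp only: sub_inf_rpos)
  qed
  have W: "real n *\<^sub>R w \<le> f" for n :: nat
  proof (induction n)
    case 0 show ?case using f0 by simp
  next
    case (Suc n)
    have "real n *\<^sub>R w \<le> real n *\<^sub>R e" using wle by (rule scaleR_left_mono) simp
    then have 1: "real n *\<^sub>R w \<le> inf f (real n *\<^sub>R e)" using Suc.IH by simp
    have "real n *\<^sub>R w + w \<le> inf f (real n *\<^sub>R e) + (f - inf f (real n *\<^sub>R e))"
      using 1 wg[of n] by (rule add_mono)
    also have "\<dots> = f" by simp
    also have "real n *\<^sub>R w + w = real (Suc n) *\<^sub>R w" by (simp add: algebra_simps)
    finally show ?case .
  qed
  have "w \<le> 0" by (rule arch[of w f]) (use W in blast)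
  then have "w = 0" using w0 by (rule order.antisym)
  then have "rpos b = 0" using e_unit[of "rpos b"] by (simp add: w_def)
  then show "b \<le> 0" using le_rpos[of b] by simp
qed

lemma trunc_dd: "downdirected (range (\<lambda>m::nat. rpos (f - real m *\<^sub>R e)))"
  unfolding downdirected_def
proof (intro ballI)
  let ?g = "\<lambda>m::nat. rpos (f - real m *\<^sub>R e)"
  have ganti: "?g m \<le> ?g n" if "n \<le> m" for n m :: nat
  proof -
    have "real n *\<^sub>R e \<le> real m *\<^sub>R e" using that e_ge0 by (intro scaleR_right_mono) auto
    then have "f - real m *\<^sub>R e \<le> f - real n *\<^sub>R e" by simp
    then show ?thesis by (rule rpos_mono)
  qed
  fix u v assume "u \<in> range ?g" "v \<in> range ?g"
  then obtain n m where uv: "u = ?g n" "v = ?g m" by auto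
  have "?g (max n m) \<le> u" "?g (max n m) \<le> v" using ganti[of n "max n m"] ganti[of m "max n m"] by (simp_all add: uv)
  then show "\<exists>c\<in>range ?g. c \<le> u \<and> c \<le> v" by blast
qed

lemma W_comp_aux: assumes r: "iscomp e r" "inR r" and fE: "f \<in> E" and f0: "0 \<le> f"
  shows "mul (e - r) (W (mul r f)) = 0"
proof -
  have rE: "r \<in> E" using r by (simp add: inR_def)
  have rfE: "mul r f \<in> E" using E_ideal_le[OF fE comp_le(2)[OF r(1) f0]] comp_le(1)[OF r(1) f0] rabs_id[OF f0] by simp
  have cr: "iscomp e (e - r)" by (rule comp_compl[OF r(1)])
  define a where "a = mul (e - r) (W (mul r f))"
  have Wrf0: "0 \<le> W (mul r f)" using rfE comp_le(2)[OF r(1) f0] by (rule W_pos)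
  have a0: "0 \<le> a" unfolding a_def by (rule comp_le(2)[OF cr Wrf0])
  have aE: "a \<in> E" using E_ideal_le[OF W_E[OF rfE] a0] comp_le(1)[OF cr Wrf0] rabs_id[OF Wrf0]
    unfolding a_def by simp
  define g where "g m = rpos (f - real m *\<^sub>R e)" for m :: nat
  have gE: "g m \<in> E" for m unfolding g_def by (rule E_rpos[OF E_diff[OF fE E_scale[OF e_in]]])
  have DE: "range g \<subseteq> E" using gE by auto
  have WD: "is_inf_in E (W ` range g) 0"
    by (rule W_cont[OF DE]) (simp_all add: g_def trunc_dd trunc_inf[OF fE f0])
  have alb: "a \<le> W (g m)" for m
  proof -
    define c where "c = real m *\<^sub>R e"
    have cE: "c \<in> E" unfolding c_def by (rule E_scale[OF e_in])
    have c0: "0 \<le> c" unfolding c_def using e_ge0 by (simp add: scaleR_nonneg_nonneg)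
    have fsplit: "inf f c + rpos (f - c) = f" by (simp flip: sub_inf_rpos)
    have i0: "0 \<le> inf f c" using f0 c0 by simp
    define g1 where "g1 = mul r (inf f c)"
    define g2 where "g2 = mul r (rpos (f - c))"
    have g1b: "0 \<le> g1" "g1 \<le> inf f c" using comp_le[OF r(1) i0] by (simp_all add: g1_def)
    have g2b: "0 \<le> g2" "g2 \<le> rpos (f - c)" using comp_le[OF r(1) rpos_ge0] by (simp_all add: g2_def)
    have ifE: "inf f c \<in> E" using fE cE by (rule E_inf)
    have rpE: "rpos (f - c) \<in> E" by (rule E_rpos[OF E_diff[OF fE cE]])
    have g1E: "g1 \<in> E" using E_ideal_le[OF ifE g1b(1)] g1b(2) rabs_id[OF i0] by simp
    have g2E: "g2 \<in> E" using E_ideal_le[OF rpE g2b(1)] g2b(2) rabs_id[OF rpos_ge0[of "f - c"]] by simp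
    have "g1 + g2 = mul r (inf f c + rpos (f - c))" unfolding g1_def g2_def by (rule mul_add_r[symmetric])
    then have "mul r f = g1 + g2" by (simp only: fsplit)
    then have Wsplit: "W (mul r f) = W g1 + W g2" using W_add[OF g1E g2E] by simp
    have Wg1: "W g1 \<le> real m *\<^sub>R r"
    proof -
      have "g1 \<le> mul r c" unfolding g1_def by (rule mul_mono_r[OF comp_ge0[OF r(1)]]) simp
      also have "mul r c = real m *\<^sub>R r" by (simp add: c_def mul_scale_r)
      finally have "W g1 \<le> W (real m *\<^sub>R r)" using g1E E_scale[OF rE] by (rule W_mono[rotated 2])
      also have "\<dots> = real m *\<^sub>R r" using W_scale[OF rE] r(2) by (simp add: inR_def)
      finally show ?thesis .
    qed
    have Wg10: "0 \<le> W g1" using g1E g1b(1) by (rule W_pos)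
    have Wg20: "0 \<le> W g2" using g2E g2b(1) by (rule W_pos)
    have "mul (e - r) (W g1) \<le> mul (e - r) (real m *\<^sub>R r)"
      by (rule mul_mono_r[OF comp_ge0[OF cr] Wg1])
    also have "\<dots> = 0" by (simp add: mul_scale_r comp_mul_compl[OF r(1)])
    finally have z: "mul (e - r) (W g1) = 0" using comp_le(2)[OF cr Wg10] by simp
    have "a = mul (e - r) (W g2)" unfolding a_def Wsplit by (simp add: mul_add_r z)
    also have "\<dots> \<le> W g2" by (rule comp_le(1)[OF cr Wg20])
    also have "\<dots> \<le> W (g m)" using g2E gE[of m] g2b(2) unfolding g_def c_def by (rule W_mono)
    finally show ?thesis .
  qed
  have "\<forall>d\<in>W ` range g. a \<le> d" using alb by blast
  then have "a \<le> 0" using WD aE unfolding is_inf_in_def by blast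
  then show ?thesis using a0 by (simp add: a_def)
qed

end



context cesetting begin

lemma W_comp_avg_pos: assumes r: "iscomp e r" "inR r" and fE: "f \<in> E" and f0: "0 \<le> f"
  shows "W (mul r f) = mul r (W f)"
proof -
  have cr: "iscomp e (e - r)" by (rule comp_compl[OF r(1)])
  have rcR: "inR (e - r)" by (rule inR_diff[OF inR_e r(2)])
  have z1: "mul (e - r) (W (mul r f)) = 0" by (rule W_comp_aux[OF r fE f0])
  have z2: "mul r (W (mul (e - r) f)) = 0" using W_comp_aux[OF cr rcR fE f0] by simp
  have rfE: "mul r f \<in> E" using E_ideal_le[OF fE comp_le(2)[OF r(1) f0]] comp_le(1)[OF r(1) f0] rabs_id[OF f0] by simp
  have rcfE: "mul (e - r) f \<in> E" using E_ideal_le[OF fE comp_le(2)[OF cr f0]] comp_le(1)[OF cr f0] rabs_id[OF f0] by simp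
  have 1: "W (mul r f) = mul r (W (mul r f))"
  proof -
    have "W (mul r f) = mul (r + (e - r)) (W (mul r f))" by simp
    also have "\<dots> = mul r (W (mul r f))" by (simp only: mul_add_l z1 add_0_right)
    finally show ?thesis .
  qed
  have "mul r f + mul (e - r) f = f" by (simp flip: mul_add_l)
  then have "W f = W (mul r f) + W (mul (e - r) f)" using W_add[OF rfE rcfE] by simp
  then have "mul r (W f) = mul r (W (mul r f)) + mul r (W (mul (e - r) f))" by (simp add: mul_add_r)
  also have "\<dots> = W (mul r f)" using 1 z2 by simp
  finally show ?thesis by simp
qed

lemma W_comp_avg: assumes r: "iscomp e r" "inR r" and fE: "f \<in> E"
  shows "W (mul r f) = mul r (W f)"
proof -
  have pE: "rpos f \<in> E" "rneg f \<in> E" using fE by (simp_all add: E_rpos E_rneg)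
  have cr: "iscomp e r" by (rule r(1))
  have m1: "mul r (rpos f) \<in> E"
    using E_ideal_le[OF pE(1) comp_le(2)[OF cr rpos_ge0]] comp_le(1)[OF cr rpos_ge0[of f]] rabs_id[OF rpos_ge0[of f]] by simp
  have m2: "mul r (rneg f) \<in> E"
    using E_ideal_le[OF pE(2) comp_le(2)[OF cr rneg_ge0]] comp_le(1)[OF cr rneg_ge0[of f]] rabs_id[OF rneg_ge0[of f]] by simp
  have "W (mul r f) = W (mul r (rpos f) - mul r (rneg f))" by (simp flip: mul_split_r)
  also have "\<dots> = W (mul r (rpos f)) - W (mul r (rneg f))" by (rule W_diff[OF m1 m2])
  also have "\<dots> = mul r (W (rpos f)) - mul r (W (rneg f))"
    by (simp only: W_comp_avg_pos[OF r pE(1) rpos_ge0] W_comp_avg_pos[OF r pE(2) rneg_ge0])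
  also have "\<dots> = mul r (W (rpos f) - W (rneg f))" by (simp only: mul_diff_r)
  also have "W (rpos f) - W (rneg f) = W f" by (simp flip: W_diff[OF pE] rprts)
  finally show ?thesis .
qed

lemma Pl_inR: assumes "inR k" shows "inR (Pl k t)"
  unfolding Pl_def by (rule W_cmp[OF inR_diff[OF assms inR_scale[OF inR_e]]])

lemma W_avg_pos: assumes kR: "inR k" and k0: "0 \<le> k" and fE: "f \<in> E" and f0: "0 \<le> f"
  and kfE: "mul k f \<in> E"
  shows "W (mul k f) = mul k (W f)"
proof -
  have Wf0: "0 \<le> W f" using fE f0 by (rule W_pos)
  have "W (mul k f) - mul k (W f) = 0"
  proof (rule layer[OF k0 Wf0])
    fix s t :: real assume st: "s \<le> t"
    define r where "r = Pl k s - Pl k t"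
    have lv: "iscomp e r" "s *\<^sub>R r \<le> mul r k" "mul r k \<le> t *\<^sub>R r"
      using Pl_level[OF st, of k] by (simp_all add: r_def)
    have rR: "inR r" unfolding r_def by (rule inR_diff[OF Pl_inR[OF kR] Pl_inR[OF kR]])
    define d where "d = mul r k - s *\<^sub>R r"
    have d0: "0 \<le> d" using lv(2) by (simp add: d_def)
    have d1: "d \<le> (t - s) *\<^sub>R r" using lv(3) by (simp add: d_def scaleR_diff_left)
    have ts: "0 \<le> t - s" using st by simp
    have m: "mul r k = s *\<^sub>R r + d" by (simp add: d_def)
    have rfE: "mul r f \<in> E" using E_ideal_le[OF fE comp_le(2)[OF lv(1) f0]] comp_le(1)[OF lv(1) f0] rabs_id[OF f0] by simp
    have df0: "0 \<le> mul d f" using d0 f0 by (rule mul_nonneg)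
    have df1: "mul d f \<le> (t - s) *\<^sub>R mul r f"
      using mul_mono_l[OF f0 d1] by (simp add: mul_scale_l)
    have tsrfE: "(t - s) *\<^sub>R mul r f \<in> E" by (rule E_scale[OF rfE])
    have rf0: "0 \<le> mul r f" by (rule comp_le(2)[OF lv(1) f0])
    have dfE: "mul d f \<in> E"
      using E_ideal_le[OF tsrfE df0] df1 rabs_id[OF scaleR_nonneg_nonneg[OF ts rf0]] by simp
    have e1: "mul r (W (mul k f)) = W (mul (mul r k) f)"
      using W_comp_avg[OF lv(1) rR kfE] by (simp add: mul_assoc)
    have e2: "W (mul (mul r k) f) = s *\<^sub>R mul r (W f) + W (mul d f)"
    proof -
      have "mul (mul r k) f = s *\<^sub>R mul r f + mul d f" by (simp add: m mul_add_l mul_scale_l)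
      then have "W (mul (mul r k) f) = W (s *\<^sub>R mul r f) + W (mul d f)" using W_add[OF E_scale[OF rfE] dfE] by simp
      then show ?thesis using W_scale[OF rfE] W_comp_avg[OF lv(1) rR fE] by simp
    qed
    have e3: "mul r (mul k (W f)) = s *\<^sub>R mul r (W f) + mul d (W f)"
      by (simp add: mul_assoc[symmetric] m mul_add_l mul_scale_l)
    have eq: "mul r (W (mul k f) - mul k (W f)) = W (mul d f) - mul d (W f)"
      by (simp add: mul_diff_r e1 e2 e3)
    have b1: "0 \<le> W (mul d f)" using dfE df0 by (rule W_pos)
    have "W (mul d f) \<le> W ((t - s) *\<^sub>R mul r f)" using dfE tsrfE df1 by (rule W_mono)
    also have "\<dots> = (t - s) *\<^sub>R mul r (W f)" using W_scale[OF rfE] W_comp_avg[OF lv(1) rR fE] by simp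
    finally have b2: "W (mul d f) \<le> (t - s) *\<^sub>R mul r (W f)" .
    have b3: "0 \<le> mul d (W f)" using d0 Wf0 by (rule mul_nonneg)
    have b4: "mul d (W f) \<le> (t - s) *\<^sub>R mul r (W f)"
      using mul_mono_l[OF Wf0 d1] by (simp add: mul_scale_l)
    have "rabs (W (mul d f) - mul d (W f)) \<le> (t - s) *\<^sub>R mul r (W f)" by (rule rabs_between[OF b1 b2 b3 b4])
    then show "rabs (mul (Pl k s - Pl k t) (W (mul k f) - mul k (W f))) \<le> (t - s) *\<^sub>R mul (Pl k s - Pl k t) (W f)"
      using eq by (simp add: r_def)
  qed
  then show ?thesis by simp
qed

lemma W_avg_kpos: assumes kR: "inR k" and k0: "0 \<le> k" and fE: "f \<in> E" and kfE: "mul k f \<in> E"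
  shows "W (mul k f) = mul k (W f)"
proof -
  have pE: "rpos f \<in> E" "rneg f \<in> E" using fE by (simp_all add: E_rpos E_rneg)
  have b1: "mul k (rpos f) \<le> rabs (mul k f)"
    using mul_mono_r[OF k0 rpos_le_rabs[of f]] by (simp add: rabs_mul rabs_id[OF k0])
  have b2: "mul k (rneg f) \<le> rabs (mul k f)"
    using mul_mono_r[OF k0 rneg_le_rabs[of f]] by (simp add: rabs_mul rabs_id[OF k0])
  have m1: "mul k (rpos f) \<in> E" by (rule E_ideal_le[OF kfE mul_nonneg[OF k0 rpos_ge0] b1])
  have m2: "mul k (rneg f) \<in> E" by (rule E_ideal_le[OF kfE mul_nonneg[OF k0 rneg_ge0] b2])
  have "W (mul k f) = W (mul k (rpos f) - mul k (rneg f))" by (simp flip: mul_split_r)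
  also have "\<dots> = W (mul k (rpos f)) - W (mul k (rneg f))" by (rule W_diff[OF m1 m2])
  also have "\<dots> = mul k (W (rpos f)) - mul k (W (rneg f))"
    by (simp only: W_avg_pos[OF kR k0 pE(1) rpos_ge0 m1] W_avg_pos[OF kR k0 pE(2) rneg_ge0 m2])
  also have "\<dots> = mul k (W (rpos f) - W (rneg f))" by (simp only: mul_diff_r)
  also have "W (rpos f) - W (rneg f) = W f" by (simp flip: W_diff[OF pE] rprts)
  finally show ?thesis .
qed

lemma W_avg: assumes kR: "inR k" and fE: "f \<in> E" and kfE: "mul k f \<in> E"
  shows "W (mul k f) = mul k (W f)"
proof -
  have b1: "rabs (mul (rpos k) f) \<le> rabs (mul k f)"
    using mul_mono_l[OF rabs_ge0[of f] rpos_le_rabs[of k]] by (simp add: rabs_mul rabs_id)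
  have b2: "rabs (mul (rneg k) f) \<le> rabs (mul k f)"
    using mul_mono_l[OF rabs_ge0[of f] rneg_le_rabs[of k]] by (simp add: rabs_mul rabs_id)
  have m1: "mul (rpos k) f \<in> E" by (rule E_ideal[OF kfE b1])
  have m2: "mul (rneg k) f \<in> E" by (rule E_ideal[OF kfE b2])
  have "W (mul k f) = W (mul (rpos k) f - mul (rneg k) f)" by (simp flip: mul_split)
  also have "\<dots> = W (mul (rpos k) f) - W (mul (rneg k) f)" by (rule W_diff[OF m1 m2])
  also have "\<dots> = mul (rpos k) (W f) - mul (rneg k) (W f)"
    by (simp only: W_avg_kpos[OF inR_rpos[OF kR] rpos_ge0 fE m1] W_avg_kpos[OF inR_rneg[OF kR] rneg_ge0 fE m2])
  also have "\<dots> = mul k (W f)" by (simp flip: mul_split)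
  finally show ?thesis .
qed

end



context fsetting begin

lemma compE: assumes "iscomp e c" "X \<in> E" shows "mul c X \<in> E"
proof -
  have "rabs (mul c X) = mul c (rabs X)" by (rule rabs_mul_l(1)[OF comp_ge0[OF assms(1)]])
  also have "\<dots> \<le> rabs X" by (rule comp_le(1)[OF assms(1) rabs_ge0])
  finally show ?thesis by (rule E_ideal[OF assms(2)])
qed

lemma comp_band: assumes c: "iscomp e c" shows "band_projection E (mul c)"
proof -
  have c0: "0 \<le> c" and ce0: "0 \<le> e - c" using c by (auto simp: iscomp_def)
  define B where "B = {x \<in> E. mul (e - c) x = 0}"
  have fixB: "mul c y = y" if "y \<in> B" for y
  proof -
    have "y = mul (c + (e - c)) y" by simp
    also have "\<dots> = mul c y" using that by (simp only: mul_add_l B_def mem_Collect_eq add_0_right)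
    finally show ?thesis by simp
  qed
  have rs: "riesz_subspace B"
    unfolding riesz_subspace_def
  proof (intro conjI ballI allI impI)
    show "0 \<in> B" by (simp add: B_def E_0)
    fix x y assume x: "x \<in> B" and y: "y \<in> B"
    then show "x + y \<in> B" by (simp add: B_def E_add mul_add_r)
    show "sup x y \<in> B" using x y by (simp add: B_def E_sup mul_sup_r[OF ce0])
    show "inf x y \<in> B" using x y by (simp add: B_def E_inf mul_inf_r[OF ce0])
  next
    fix a x assume "x \<in> B" then show "a *\<^sub>R x \<in> B" by (simp add: B_def E_scale mul_scale_r)
  qed
  have bd: "band E B"
    unfolding band_def
  proof (intro conjI ballI allI impI)
    show "B \<subseteq> E" by (auto simp: B_def)
    show "riesz_subspace B" by (rule rs)
  next
    fix x y assume xE: "x \<in> E" and y: "y \<in> B" and le: "rabs x \<le> rabs y"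
    have "rabs (mul (e - c) x) = mul (e - c) (rabs x)" by (rule rabs_mul_l(1)[OF ce0])
    also have "\<dots> \<le> mul (e - c) (rabs y)" by (rule mul_mono_r[OF ce0 le])
    also have "\<dots> = rabs (mul (e - c) y)" by (rule rabs_mul_l(1)[OF ce0, symmetric])
    also have "\<dots> = 0" using y by (simp add: B_def)
    finally have "mul (e - c) x = 0" by (rule rabs_le0)
    then show "x \<in> B" using xE by (simp add: B_def)
  next
    fix A s assume "A \<subseteq> B \<and> is_sup_in E A s"
    then have AB: "A \<subseteq> B" and s: "is_sup_in E A s" by auto
    have sE: "s \<in> E" using s by (simp add: is_sup_in_def)
    show "s \<in> B"
    proof (cases "A = {}")
      case True
      have "s - rabs s \<in> E" using sE by (simp add: E_diff E_rabs)
      then have "s \<le> s - rabs s" using s True by (simp add: is_sup_in_def)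
      then have "rabs s \<le> 0" by simp
      then have "s = 0" by (rule rabs_le0)
      then show ?thesis by (simp add: B_def E_0)
    next
      case False
      then obtain a0 where a0: "a0 \<in> A" by blast
      have csE: "mul c s \<in> E" by (rule compE[OF c sE])
      have "\<forall>a\<in>A. a \<le> mul c s"
      proof
        fix a assume a: "a \<in> A"
        have "a \<le> s" using s a by (simp add: is_sup_in_def)
        then have "mul c a \<le> mul c s" by (rule mul_mono_r[OF c0])
        then show "a \<le> mul c s" using fixB[of a] a AB by auto
      qed
      then have "s \<le> mul c s" using s csE by (simp add: is_sup_in_def)
      then have 1: "mul (e - c) s \<le> 0" by (simp add: mul_diff_l)
      have "a0 \<le> s" using s a0 by (simp add: is_sup_in_def)
      then have "mul (e - c) a0 \<le> mul (e - c) s" by (rule mul_mono_r[OF ce0])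
      then have 2: "0 \<le> mul (e - c) s" using a0 AB by (auto simp: B_def)
      from 1 2 have "mul (e - c) s = 0" by simp
      then show ?thesis using sE by (simp add: B_def)
    qed
  qed
  have proj: "\<forall>x\<in>E. mul c x \<in> B \<and> x - mul c x \<in> disj_compl E B"
  proof
    fix x assume xE: "x \<in> E"
    have cxE: "mul c x \<in> E" by (rule compE[OF c xE])
    have "mul (e - c) (mul c x) = 0" by (simp add: mul_assoc[symmetric] comp_mul_compl[OF c])
    then have 1: "mul c x \<in> B" using cxE by (simp add: B_def)
    have eq: "x - mul c x = mul (e - c) x" by (simp add: mul_diff_l)
    have ecxE: "mul (e - c) x \<in> E" by (rule compE[OF comp_compl[OF c] xE])
    have "\<forall>y\<in>B. inf (rabs (mul (e - c) x)) (rabs y) = 0"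
    proof
      fix y assume y: "y \<in> B"
      have ry: "rabs y = mul c (rabs y)" using fixB[OF y] rabs_mul_l(1)[OF c0, of y] by simp
      have rx: "rabs (mul (e - c) x) = mul (e - c) (rabs x)" by (rule rabs_mul_l(1)[OF ce0])
      have d0: "inf (e - c) c = 0" using c by (simp add: iscomp_def inf_commute)
      have "inf (mul (e - c) (rabs x)) c = 0" using mul_ax[OF d0 rabs_ge0[of x]] by blast
      then have "inf c (mul (e - c) (rabs x)) = 0" by (simp add: inf_commute)
      then have "inf (mul c (rabs y)) (mul (e - c) (rabs x)) = 0" using mul_ax[of c "mul (e - c) (rabs x)" "rabs y"] by simp
      then show "inf (rabs (mul (e - c) x)) (rabs y) = 0" using ry rx by (simp add: inf_commute)
    qed
    then have "x - mul c x \<in> disj_compl E B" using ecxE eq by (simp add: disj_compl_def)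
    then show "mul c x \<in> B \<and> x - mul c x \<in> disj_compl E B" using 1 by simp
  qed
  show ?thesis unfolding band_projection_def using bd proj by blast
qed

lemma bp_pos: assumes P: "band_projection E P" and xE: "x \<in> E" and x0: "0 \<le> x"
  shows "P x \<in> E" "0 \<le> P x" "P x \<le> x"
proof -
  obtain B where B: "band E B" "\<forall>x\<in>E. P x \<in> B \<and> x - P x \<in> disj_compl E B"
    using P unfolding band_projection_def by blast
  have aB: "P x \<in> B" and bD: "x - P x \<in> disj_compl E B" using B(2) xE by auto
  show aE: "P x \<in> E" using aB B(1) by (auto simp: band_def)
  have d: "inf (rabs (x - P x)) (rabs (P x)) = 0" using bD aB by (simp add: disj_compl_def)
  then have d': "inf (rabs (P x)) (rabs (x - P x)) = 0" by (simp add: inf_commute)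
  have "rabs (P x + (x - P x)) = rabs (P x) + rabs (x - P x)" by (rule disj_abs_add[OF d'])
  then have "x = rabs (P x) + rabs (x - P x)" using rabs_id[OF x0] by simp
  then have sum: "(rabs (P x) - P x) + (rabs (x - P x) - (x - P x)) = 0" by (simp add: algebra_simps)
  have h0: "0 \<le> rabs (P x) - P x" using le_rabs(1)[of "P x"] by simp
  have h1: "0 \<le> rabs (x - P x) - (x - P x)" using le_rabs(1)[of "x - P x"] by simp
  have "rabs (P x) - P x = 0 \<and> rabs (x - P x) - (x - P x) = 0"
    using add_nonneg_eq_0_iff[OF h0 h1] sum by blast
  then have "rabs (P x) - P x = 0" "rabs (x - P x) - (x - P x) = 0" by auto
  then have "P x = rabs (P x)" "x - P x = rabs (x - P x)" by simp_all
  then show "0 \<le> P x" "P x \<le> x" by (metis rabs_ge0, metis rabs_ge0 diff_ge_0_iff_ge)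
qed

end



context fsetting begin
lemma mulE_bdd: assumes "0 \<le> a" "a \<le> e" "X \<in> E" shows "mul a X \<in> E"
proof -
  have "rabs (mul a X) = mul a (rabs X)" by (rule rabs_mul_l(1)[OF assms(1)])
  also have "\<dots> \<le> mul e (rabs X)" by (rule mul_mono_l[OF rabs_ge0 assms(2)])
  finally show ?thesis by (intro E_ideal[OF assms(3)]) simp
qed
lemma mulE_bdd': assumes "0 \<le> a" "a \<le> e" "X \<in> E" shows "mul X a \<in> E"
  using mulE_bdd[OF assms] by (simp add: mul_comm)
end

theorem corollary4p9:
  fixes E :: "'a::{ordered_real_vector,lattice} set"
    and mul :: "'a \<Rightarrow> 'a \<Rightarrow> 'a"
    and T U V :: "'a \<Rightarrow> 'a"
    and e g :: 'a
  assumes "is_universal_completion_of E"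
    and "dedekind_complete_on E"
    and "weak_order_unit E e"
    and "f_algebra_unit mul e"
    and "cond_exp E T" and "T e = e"
    and "T_universally_complete E T"
    and "cond_exp E U" and "cond_exp E V"
    and "compatible E T U" and "compatible E T V"
    and "g \<in> Linfty E T"
  shows "norm_T1 T (U (V g) - T g) \<le> 4 *\<^sub>R mul (alphaT E mul e T U V) (norm_Tinf E T g)"
proof -
  interpret F: fsetting E mul e using assms(1-4) by (simp add: fsetting_def)
  have cTU: "\<And>x. x \<in> E \<Longrightarrow> T (U x) = T x" "\<And>x. x \<in> E \<Longrightarrow> U (T x) = T x"
    using assms(10) by (auto simp: compatible_def)
  have cTV: "\<And>x. x \<in> E \<Longrightarrow> T (V x) = T x" "\<And>x. x \<in> E \<Longrightarrow> V (T x) = T x"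
    using assms(11) by (auto simp: compatible_def)
  have Ue: "U e = e" using cTU(2)[OF F.e_in] assms(6) by simp
  have Ve: "V e = e" using cTV(2)[OF F.e_in] assms(6) by simp
  interpret CT: cesetting E mul e T using assms(1-6) by (simp add: cesetting_def cesetting_axioms_def fsetting_def)
  interpret CU: cesetting E mul e U using assms(1-4,8) Ue by (simp add: cesetting_def cesetting_axioms_def fsetting_def)
  interpret CV: cesetting E mul e V using assms(1-4,9) Ve by (simp add: cesetting_def cesetting_axioms_def fsetting_def)
  have gE: "g \<in> E" using assms(12) by (simp add: Linfty_def)
  define S where "S = {h \<in> T ` E. 0 \<le> h \<and> rabs g \<le> h}"
  define N where "N = norm_Tinf E T g"
  have Ndef: "N = inf_in E S" by (simp add: N_def norm_Tinf_def S_def)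
  have SE: "S \<subseteq> E" using CT.W_E by (auto simp: S_def)
  have SR: "\<And>h. h \<in> S \<Longrightarrow> CT.inR h" by (auto simp: S_def CT.inR_img[symmetric])
  have Sne: "S \<noteq> {}" using assms(12) by (auto simp: Linfty_def S_def)
  have Sinf: "is_inf_in E S N"
  proof -
    have a1: "uminus ` S \<subseteq> E" using SE by (auto intro: F.E_uminus)
    have a2: "uminus ` S \<noteq> {}" using Sne by simp
    have a3: "\<forall>a\<in>uminus ` S. a \<le> 0" by (auto simp: S_def)
    have "uminus ` S \<subseteq> E \<and> uminus ` S \<noteq> {} \<and> (\<exists>b\<in>E. \<forall>a\<in>uminus ` S. a \<le> b)"
      using a1 a2 a3 F.E_0 by blast
    from F.dcE[unfolded dedekind_complete_on_def, rule_format, OF this]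
    obtain s where s: "is_sup_in E (uminus ` S) s" by blast
    have i: "is_inf_in E S (- s)"
      unfolding is_inf_in_def
    proof (intro conjI ballI impI)
      show "- s \<in> E" using s by (simp add: is_sup_in_def F.E_uminus)
      fix h assume "h \<in> S" then have "- h \<le> s" using s by (simp add: is_sup_in_def)
      then show "- s \<le> h" by (simp add: minus_le_iff)
    next
      fix b assume bE: "b \<in> E" and lb: "\<forall>h\<in>S. b \<le> h"
      have "\<forall>a\<in>uminus ` S. a \<le> - b" using lb by auto
      then have "s \<le> - b" using s F.E_uminus[OF bE] by (simp add: is_sup_in_def)
      then show "b \<le> - s" by (simp add: le_minus_iff)
    qed
    have "inf_in E S = - s" unfolding inf_in_def by (rule the_equality) (rule i, rule is_inf_unique[OF _ i])
    then show ?thesis using i Ndef by simp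
  qed
  have NE: "N \<in> E" using Sinf by (simp add: is_inf_in_def)
  have N0: "0 \<le> N" using Sinf F.E_0 unfolding is_inf_in_def by (auto simp: S_def)
  have gN: "rabs g \<le> N" using Sinf F.E_rabs[OF gE] unfolding is_inf_in_def by (auto simp: S_def)
  have TN: "T N = N"
  proof -
    define D where "D = (\<lambda>h. h - N) ` S"
    have NleS: "\<And>h. h \<in> S \<Longrightarrow> N \<le> h" using Sinf by (simp add: is_inf_in_def)
    have DE: "D \<subseteq> E" using SE NE by (auto simp: D_def intro: F.E_diff)
    have Dne: "D \<noteq> {}" using Sne by (simp add: D_def)
    have Ddd: "downdirected D"
      unfolding downdirected_def
    proof (intro ballI)
      fix u v assume "u \<in> D" "v \<in> D"
      then obtain h1 h2 where h: "h1 \<in> S" "h2 \<in> S" "u = h1 - N" "v = h2 - N" by (auto simp: D_def)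
      have "CT.inR (inf h1 h2)" using SR[OF h(1)] SR[OF h(2)] by (rule CT.inR_inf)
      then have "inf h1 h2 \<in> S" using h(1,2) by (auto simp: S_def CT.inR_img[symmetric])
      then have "inf h1 h2 - N \<in> D" by (simp add: D_def)
      moreover have "inf h1 h2 - N \<le> u" "inf h1 h2 - N \<le> v" using h by (auto intro: diff_right_mono)
      ultimately show "\<exists>c\<in>D. c \<le> u \<and> c \<le> v" by blast
    qed
    have Dinf: "is_inf_in E D 0"
      unfolding is_inf_in_def
    proof (intro conjI ballI impI)
      show "0 \<in> E" by (rule F.E_0)
      fix d assume "d \<in> D" then show "0 \<le> d" using NleS by (auto simp: D_def)
    next
      fix b assume bE: "b \<in> E" and lb: "\<forall>d\<in>D. b \<le> d"
      have "\<forall>h\<in>S. b + N \<le> h" using lb by (auto simp: D_def le_diff_eq)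
      then have "b + N \<le> N" using Sinf F.E_add[OF bE NE] unfolding is_inf_in_def by blast
      then show "b \<le> 0" by simp
    qed
    have WD: "is_inf_in E (T ` D) 0" by (rule CT.W_cont[OF DE Dne Ddd Dinf])
    have Th: "\<And>h. h \<in> S \<Longrightarrow> T (h - N) = h - T N"
      using SE NE SR by (simp add: CT.W_diff CT.inR_def subset_iff)
    have 1: "T N \<le> N"
    proof -
      have "\<forall>h\<in>S. T N \<le> h"
      proof
        fix h assume hS: "h \<in> S"
        then have "h - N \<in> D" by (simp add: D_def)
        then have "0 \<le> T (h - N)" using WD by (simp add: is_inf_in_def)
        then show "T N \<le> h" using Th[OF hS] by simp
      qed
      then show ?thesis using Sinf CT.W_E[OF NE] by (simp add: is_inf_in_def)
    qed
    have 2: "N - T N \<le> 0"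
    proof -
      have "\<forall>d\<in>T ` D. N - T N \<le> d" using NleS Th by (auto simp: D_def)
      moreover have "N - T N \<in> E" using NE CT.W_E[OF NE] by (rule F.E_diff)
      ultimately show ?thesis using WD unfolding is_inf_in_def by blast
    qed
    from 1 2 show ?thesis by simp
  qed
  have NR: "CT.inR N" using NE TN by (simp add: CT.inR_def)
  have VgE: "V g \<in> E" by (rule CV.W_E[OF gE])
  have UVgE: "U (V g) \<in> E" by (rule CU.W_E[OF VgE])
  have TgE: "T g \<in> E" by (rule CT.W_E[OF gE])
  define h where "h = U (V g) - T g"
  have hE: "h \<in> E" unfolding h_def using UVgE TgE by (rule F.E_diff)
  have hR: "CU.inR h"
    using hE CU.W_diff[OF UVgE TgE] CU.W_idem[OF VgE] cTU(2)[OF gE] by (simp add: CU.inR_def h_def)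
  have Th: "T h = 0"
    using CT.W_diff[OF UVgE TgE] cTU(1)[OF VgE] cTV(1)[OF gE] CT.W_idem[OF gE] by (simp add: h_def)
  define p where "p = F.cmp h"
  have pc: "iscomp e p" unfolding p_def by (rule F.comp_cmp)
  have pR: "CU.inR p" unfolding p_def by (rule CU.W_cmp[OF hR])
  have pE: "p \<in> E" using pR by (simp add: CU.inR_def)
  have p0: "0 \<le> p" and pe: "p \<le> e" using pc by (simp_all add: iscomp_def)
  have ph: "mul p h = rpos h" unfolding p_def by (rule F.cmp_mul)
  have rhE: "rpos h \<in> E" using hE by (rule F.E_rpos)
  have absh: "T (rabs h) = 2 *\<^sub>R T (rpos h)"
  proof -
    have "rabs h = 2 *\<^sub>R rpos h - h"
    proof -
      have "2 *\<^sub>R rpos h - (rpos h - rneg h) = rpos h + rneg h" by (simp add: scaleR_2)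
      then show ?thesis by (simp flip: rprts rabs_prts)
    qed
    then have "T (rabs h) = T (2 *\<^sub>R rpos h - h)" by simp
    also have "\<dots> = 2 *\<^sub>R T (rpos h) - T h" using CT.W_diff[OF F.E_scale[OF rhE] hE] CT.W_scale[OF rhE] by simp
    finally show ?thesis using Th by simp
  qed
  have VpE: "V p \<in> E" by (rule CV.W_E[OF pE])
  have TpE: "T p \<in> E" by (rule CT.W_E[OF pE])
  have Vp0: "0 \<le> V p" using pE p0 by (rule CV.W_pos)
  have Vpe: "V p \<le> e" using CV.W_mono[OF pE F.e_in pe] Ve by simp
  have Tp0: "0 \<le> T p" using pE p0 by (rule CT.W_pos)
  have Tpe: "T p \<le> e" using CT.W_mono[OF pE F.e_in pe] assms(6) by simp
  define u where "u = V p - T p"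
  have uE: "u \<in> E" unfolding u_def using VpE TpE by (rule F.E_diff)
  have ue: "rabs u \<le> e" unfolding u_def by (rule rabs_between[OF Vp0 Vpe Tp0 Tpe])
  have VgR: "CV.inR (V g)" using VgE CV.W_idem[OF gE] by (simp add: CV.inR_def)
  have VpR: "CV.inR (V p)" using VpE CV.W_idem[OF pE] by (simp add: CV.inR_def)
  have TgR: "CT.inR (T g)" using TgE CT.W_idem[OF gE] by (simp add: CT.inR_def)
  have TpR: "CT.inR (T p)" using TpE CT.W_idem[OF pE] by (simp add: CT.inR_def)
  have step1: "T (mul p (U (V g))) = T (mul p (V g))"
  proof -
    have "U (mul p (V g)) = mul p (U (V g))" by (rule CU.W_comp_avg[OF pc pR VgE])
    then have "T (mul p (U (V g))) = T (U (mul p (V g)))" by simp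
    also have "\<dots> = T (mul p (V g))" by (rule cTU(1)[OF F.compE[OF pc VgE]])
    finally show ?thesis .
  qed
  have Vpg: "mul (V p) g \<in> E" by (rule F.mulE_bdd[OF Vp0 Vpe gE])
  have Tpg: "mul (T p) g \<in> E" by (rule F.mulE_bdd[OF Tp0 Tpe gE])
  have step2: "T (mul p (V g)) = T (mul (V p) g)"
  proof -
    have Vgp: "mul (V g) p \<in> E" by (rule F.mulE_bdd'[OF p0 pe VgE])
    have "T (mul p (V g)) = T (V (mul p (V g)))" by (rule cTV(1)[OF F.compE[OF pc VgE], symmetric])
    also have "V (mul p (V g)) = V (mul (V g) p)" by (simp add: F.mul_comm)
    also have "\<dots> = mul (V g) (V p)" by (rule CV.W_avg[OF VgR pE Vgp])
    also have "\<dots> = mul (V p) (V g)" by (rule F.mul_comm)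
    also have "\<dots> = V (mul (V p) g)" by (rule CV.W_avg[OF VpR gE Vpg, symmetric])
    also have "T (V (mul (V p) g)) = T (mul (V p) g)" by (rule cTV(1)[OF Vpg])
    finally show ?thesis .
  qed
  have step3: "T (mul p (T g)) = T (mul (T p) g)"
  proof -
    have Tgp: "mul (T g) p \<in> E" by (rule F.mulE_bdd'[OF p0 pe TgE])
    have "T (mul p (T g)) = T (mul (T g) p)" by (simp add: F.mul_comm)
    also have "\<dots> = mul (T g) (T p)" by (rule CT.W_avg[OF TgR pE Tgp])
    also have "\<dots> = mul (T p) (T g)" by (rule F.mul_comm)
    also have "\<dots> = T (mul (T p) g)" by (rule CT.W_avg[OF TpR gE Tpg, symmetric])
    finally show ?thesis .
  qed
  have Tposh: "T (rpos h) = T (mul u g)"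
  proof -
    have "mul p h = mul p (U (V g)) - mul p (T g)" by (simp add: h_def F.mul_diff_r)
    then have "rpos h = mul p (U (V g)) - mul p (T g)" by (simp only: ph)
    then have "T (rpos h) = T (mul p (U (V g))) - T (mul p (T g))"
      using CT.W_diff[OF F.compE[OF pc UVgE] F.compE[OF pc TgE]] by simp
    also have "\<dots> = T (mul (V p) g) - T (mul (T p) g)" by (simp add: step1 step2 step3)
    also have "\<dots> = T (mul (V p) g - mul (T p) g)" by (rule CT.W_diff[OF Vpg Tpg, symmetric])
    also have "mul (V p) g - mul (T p) g = mul u g" by (simp add: u_def F.mul_diff_l)
    finally show ?thesis .
  qed
  have ugE: "mul u g \<in> E" using F.E_diff[OF Vpg Tpg] by (simp add: u_def F.mul_diff_l)
  have uNE: "mul (rabs u) N \<in> E" by (rule F.mulE_bdd[OF rabs_ge0 ue NE])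
  have le1: "T (mul u g) \<le> T (mul (rabs u) N)"
  proof -
    have "mul u g \<le> mul (rabs u) (rabs g)" by (rule F.mul_le_rabs)
    also have "\<dots> \<le> mul (rabs u) N" by (rule F.mul_mono_r[OF rabs_ge0 gN])
    finally show ?thesis using ugE uNE by (intro CT.W_mono)
  qed
  have eq1: "T (mul (rabs u) N) = mul N (T (rabs u))"
  proof -
    have NuE: "mul N (rabs u) \<in> E" using uNE by (simp add: F.mul_comm)
    have "T (mul (rabs u) N) = T (mul N (rabs u))" by (simp add: F.mul_comm)
    also have "\<dots> = mul N (T (rabs u))" by (rule CT.W_avg[OF NR F.E_rabs[OF uE] NuE])
    finally show ?thesis .
  qed
  have uR: "CV.inR u"
    using uE CV.W_diff[OF VpE TpE] CV.W_idem[OF pE] cTV(2)[OF pE] by (simp add: CV.inR_def u_def)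
  have Tu: "T u = 0" using CT.W_diff[OF VpE TpE] cTV(1)[OF pE] CT.W_idem[OF pE] by (simp add: u_def)
  define q where "q = F.cmp u"
  have qc: "iscomp e q" unfolding q_def by (rule F.comp_cmp)
  have qR: "CV.inR q" unfolding q_def by (rule CV.W_cmp[OF uR])
  have qE: "q \<in> E" using qR by (simp add: CV.inR_def)
  have q0: "0 \<le> q" and qe: "q \<le> e" using qc by (simp_all add: iscomp_def)
  have qu: "mul q u = rpos u" unfolding q_def by (rule F.cmp_mul)
  have ruE: "rpos u \<in> E" using uE by (rule F.E_rpos)
  have absu: "T (rabs u) = 2 *\<^sub>R T (rpos u)"
  proof -
    have "rabs u = 2 *\<^sub>R rpos u - u"
    proof -
      have "2 *\<^sub>R rpos u - (rpos u - rneg u) = rpos u + rneg u" by (simp add: scaleR_2)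
      then show ?thesis by (simp flip: rprts rabs_prts)
    qed
    then have "T (rabs u) = T (2 *\<^sub>R rpos u - u)" by simp
    also have "\<dots> = 2 *\<^sub>R T (rpos u) - T u" using CT.W_diff[OF F.E_scale[OF ruE] uE] CT.W_scale[OF ruE] by simp
    finally show ?thesis using Tu by simp
  qed
  have Tposu: "T (rpos u) = T (mul q p) - mul (T p) (T q)"
  proof -
    have "mul q u = mul q (V p) - mul q (T p)" by (simp add: u_def F.mul_diff_r)
    then have "rpos u = mul q (V p) - mul q (T p)" by (simp only: qu)
    then have "T (rpos u) = T (mul q (V p)) - T (mul q (T p))"
      using CT.W_diff[OF F.compE[OF qc VpE] F.compE[OF qc TpE]] by simp
    also have "T (mul q (V p)) = T (mul q p)"
    proof -
      have "V (mul q p) = mul q (V p)" by (rule CV.W_comp_avg[OF qc qR pE])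
      then have "T (mul q (V p)) = T (V (mul q p))" by simp
      also have "\<dots> = T (mul q p)" by (rule cTV(1)[OF F.compE[OF qc pE]])
      finally show ?thesis .
    qed
    also have "T (mul q (T p)) = mul (T p) (T q)"
    proof -
      have Tpq: "mul (T p) q \<in> E" by (rule F.mulE_bdd'[OF q0 qe TpE])
      have "T (mul q (T p)) = T (mul (T p) q)" by (simp add: F.mul_comm)
      also have "\<dots> = mul (T p) (T q)" by (rule CT.W_avg[OF TpR qE Tpq])
      finally show ?thesis .
    qed
    finally show ?thesis .
  qed
  define Aset where "Aset = {rabs (T (P (Q e)) - mul (T (P e)) (T (Q e))) | P Q. P \<in> bandsB E e U \<and> Q \<in> bandsB E e V}"
  have alpha_def': "alphaT E mul e T U V = sup_in E Aset" by (simp add: alphaT_def Aset_def)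
  have Pin: "mul p \<in> bandsB E e U"
    using F.comp_band[OF pc] pR by (simp add: bandsB_def CU.inR_img)
  have Qin: "mul q \<in> bandsB E e V"
    using F.comp_band[OF qc] qR by (simp add: bandsB_def CV.inR_img)
  have elem: "rabs (T (mul q p) - mul (T p) (T q)) \<in> Aset"
  proof -
    have "rabs (T (mul p (mul q e)) - mul (T (mul p e)) (T (mul q e))) \<in> Aset"
      unfolding Aset_def using Pin Qin by blast
    then show ?thesis by (simp add: F.mul_comm[of p q])
  qed
  have Abd: "\<forall>a\<in>Aset. a \<in> E \<and> a \<le> e"
  proof
    fix a assume "a \<in> Aset"
    then obtain P Q where PQ: "P \<in> bandsB E e U" "Q \<in> bandsB E e V"
      and a: "a = rabs (T (P (Q e)) - mul (T (P e)) (T (Q e)))" by (auto simp: Aset_def)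
    have bP: "band_projection E P" and bQ: "band_projection E Q" using PQ by (auto simp: bandsB_def)
    note Qe = F.bp_pos[OF bQ F.e_in F.e_ge0]
    note PQe = F.bp_pos[OF bP Qe(1) Qe(2)]
    note Pe = F.bp_pos[OF bP F.e_in F.e_ge0]
    have PQe_le: "P (Q e) \<le> e" using PQe(3) Qe(3) by (rule order_trans)
    have t1: "0 \<le> T (P (Q e))" "T (P (Q e)) \<le> e" "T (P (Q e)) \<in> E"
      using CT.W_pos[OF PQe(1,2)] CT.W_mono[OF PQe(1) F.e_in PQe_le] assms(6) CT.W_E[OF PQe(1)] by simp_all
    have t2: "0 \<le> T (P e)" "T (P e) \<le> e"
      using CT.W_pos[OF Pe(1,2)] CT.W_mono[OF Pe(1) F.e_in Pe(3)] assms(6) by simp_all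
    have t3: "0 \<le> T (Q e)" "T (Q e) \<le> e"
      using CT.W_pos[OF Qe(1,2)] CT.W_mono[OF Qe(1) F.e_in Qe(3)] assms(6) by simp_all
    have m0: "0 \<le> mul (T (P e)) (T (Q e))" by (rule F.mul_nonneg[OF t2(1) t3(1)])
    have "mul (T (P e)) (T (Q e)) \<le> mul e (T (Q e))" by (rule F.mul_mono_l[OF t3(1) t2(2)])
    then have me: "mul (T (P e)) (T (Q e)) \<le> e" using t3(2) by simp
    have mE: "mul (T (P e)) (T (Q e)) \<in> E"
      using F.E_ideal_le[OF F.e_in m0] me rabs_id[OF F.e_ge0] by simp
    have "a \<le> e" unfolding a by (rule rabs_between[OF t1(1,2) m0 me])
    moreover have "a \<in> E" unfolding a by (intro F.E_rabs F.E_diff t1(3) mE)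
    ultimately show "a \<in> E \<and> a \<le> e" by simp
  qed
  have asup: "is_sup_in E Aset (alphaT E mul e T U V)"
  proof -
    have "Aset \<subseteq> E \<and> Aset \<noteq> {} \<and> (\<exists>b\<in>E. \<forall>a\<in>Aset. a \<le> b)"
      using Abd elem F.e_in by blast
    from F.dcE[unfolded dedekind_complete_on_def, rule_format, OF this]
    obtain s where s: "is_sup_in E Aset s" by blast
    have "sup_in E Aset = s" unfolding sup_in_def by (rule the_equality) (rule s, rule is_sup_unique[OF _ s])
    then show ?thesis using s alpha_def' by simp
  qed
  have elem_le: "rabs (T (mul q p) - mul (T p) (T q)) \<le> alphaT E mul e T U V"
    using asup elem by (simp add: is_sup_in_def)
  have le2: "T (rpos u) \<le> alphaT E mul e T U V"
    using le_rabs(1)[of "T (mul q p) - mul (T p) (T q)"] elem_le Tposu by simp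
  have "norm_T1 T (U (V g) - T g) = T (rabs h)" by (simp add: norm_T1_def h_def)
  also have "\<dots> = 2 *\<^sub>R T (mul u g)" by (simp add: absh Tposh)
  also have "\<dots> \<le> 2 *\<^sub>R T (mul (rabs u) N)" by (rule scaleR_left_mono[OF le1]) simp
  also have "\<dots> = 2 *\<^sub>R mul N (T (rabs u))" by (simp add: eq1)
  also have "\<dots> = 4 *\<^sub>R mul N (T (rpos u))" by (simp add: absu F.mul_scale_r)
  also have "\<dots> \<le> 4 *\<^sub>R mul N (alphaT E mul e T U V)"
    by (rule scaleR_left_mono[OF F.mul_mono_r[OF N0 le2]]) simp
  also have "\<dots> = 4 *\<^sub>R mul (alphaT E mul e T U V) (norm_Tinf E T g)" by (simp add: F.mul_comm N_def)
  finally show ?thesis .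
qed



end
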